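(* There exist positive integers $g$ and $r_0$ (with $r_0$ even) and a family of DAGs $G$ with $n\to\infty$ nodes such that $\mathrm{OPT}_{I/O}^{(1)}=\Theta(n)$, while $\mathrm{OPT}_{I/O}^{(2)}=0$; here $\mathrm{OPT}_{I/O}^{(1)}$ is computed with $1$ processor and fast memory $r_0$, and $\mathrm{OPT}_{I/O}^{(2)}$ is computed with $2$ processors and fast memory $r_0/2$ each (and the same also holds with $2$ processors and fast memory $r_0$ each).
   Context: Multiprocessor red-blue pebbling (MPP). Input: a DAG $G=(V,E)$ with $n=|V|$ and positive integers $k$ (number of processors), $r$ (fast-memory size per processor), $g$ (cost of an I/O step). $\Delta_{in}$ denotes the maximum in-degree of $G$; sources/sinks are nodes of in-degree/out-degree $0$. A configuration is a tuple $(R^1,\dots,R^k,B)$ of subsets of $V$ ($R^j$ = nodes carrying a red pebble of processor $j$, $B$ = nodes carrying a blue pebble); it is valid if $|R^j|\le r$ for all $j$. The initial configuration has all sets empty; a configuration is terminal if every sink lies in $B\cup\bigcup_j R^j$. The transition rules are: (R1) for some $m\le k$, pairwise distinct processors $j_1,\dots,j_m$ and nodes $v_1,\dots,v_m$ with $v_i\in R^{j_i}$, add each $v_i$ to $B$ (cost $g$); (R2) for some $m\le k$, pairwise distinct processors $j_1,\dots,j_m$ and nodes $v_1,\dots,v_m\in B$, add each $v_i$ to $R^{j_i}$ (cost $g$); (R3) for some $m\le k$, pairwise distinct processors $j_1,\dots,j_m$ and nodes $v_1,\dots,v_m$ such that every in-neighbor of $v_i$ lies in $R^{j_i}$, add each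 $v_i$ to $R^{j_i}$ (cost $1$); (R4) remove a single red or blue pebble (cost $0$). A pebbling strategy is a sequence of valid configurations starting at the initial configuration and ending at a terminal one, each obtained from its predecessor by one rule; its cost is the sum of the costs of the rules applied. $\mathrm{OPT}$ denotes the minimum cost of a pebbling strategy. Applications of (R1),(R2) are called I/O steps and applications of (R3) compute steps. $\mathrm{OPT}_{I/O}^{(k)}$ denotes the minimum, over all minimum-cost pebbling strategies with $k$ processors, of the number of I/O steps. *)

theory Defs
  imports Main "HOL-Library.Landau_Symbols"
begin

text \<open>Processors are numbered 0..<k.
A configuration is a pair (R, B) where R j is the set of nodes carrying a red
pebble of processor j and B is the set of nodes carrying a blue pebble.\<close>

definition is_dag :: "'a set \<Rightarrow> ('a \<times> 'a) set \<Rightarrow> bool" where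
  "is_dag V E \<longleftrightarrow> finite V \<and> E \<subseteq> V \<times> V \<and> acyclic E"

type_synonym 'a config = "(nat \<Rightarrow> 'a set) \<times> 'a set"

text \<open>A partial map sigma from processors to nodes
(with pairwise distinct processors by construction) describes the parallel
rules R1 (Save), R2 (Load), R3 (Compute). R4 is DelRed / DelBlue.\<close>

datatype 'a move =
    Save "nat \<Rightarrow> 'a option"
  | Load "nat \<Rightarrow> 'a option"
  | Compute "nat \<Rightarrow> 'a option"
  | DelRed nat 'a
  | DelBlue 'a

definition init_config :: "'a config" where
  "init_config = (\<lambda>_. {}, {})"

definition add_red :: "(nat \<Rightarrow> 'a option) \<Rightarrow> (nat \<Rightarrow> 'a set) \<Rightarrow> (nat \<Rightarrow> 'a set)" where
  "add_red \<sigma> R = (\<lambda>j. case \<sigma> j of None \<Rightarrow> R j | Some v \<Rightarrow> insert v (R j))"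

fun applicable :: "'a set \<Rightarrow> ('a \<times> 'a) set \<Rightarrow> nat \<Rightarrow> 'a config \<Rightarrow> 'a move \<Rightarrow> bool" where
  "applicable V E k (R, B) (Save \<sigma>) \<longleftrightarrow>
     dom \<sigma> \<noteq> {} \<and> dom \<sigma> \<subseteq> {..<k} \<and> (\<forall>j v. \<sigma> j = Some v \<longrightarrow> v \<in> R j)"
| "applicable V E k (R, B) (Load \<sigma>) \<longleftrightarrow>
     dom \<sigma> \<noteq> {} \<and> dom \<sigma> \<subseteq> {..<k} \<and> ran \<sigma> \<subseteq> B"
| "applicable V E k (R, B) (Compute \<sigma>) \<longleftrightarrow>
     dom \<sigma> \<noteq> {} \<and> dom \<sigma> \<subseteq> {..<k} \<and>
     (\<forall>j v. \<sigma> j = Some v \<longrightarrow> v \<in> V \<and> (\<forall>u. (u, v) \<in> E \<longrightarrow> u \<in> R j))"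
| "applicable V E k (R, B) (DelRed j v) \<longleftrightarrow> j < k \<and> v \<in> R j"
| "applicable V E k (R, B) (DelBlue v) \<longleftrightarrow> v \<in> B"

fun apply_move :: "'a config \<Rightarrow> 'a move \<Rightarrow> 'a config" where
  "apply_move (R, B) (Save \<sigma>) = (R, B \<union> ran \<sigma>)"
| "apply_move (R, B) (Load \<sigma>) = (add_red \<sigma> R, B)"
| "apply_move (R, B) (Compute \<sigma>) = (add_red \<sigma> R, B)"
| "apply_move (R, B) (DelRed j v) = (R(j := R j - {v}), B)"
| "apply_move (R, B) (DelBlue v) = (R, B - {v})"

fun move_cost :: "nat \<Rightarrow> 'a move \<Rightarrow> nat" where
  "move_cost g (Save _) = g"
| "move_cost g (Load _) = g"
| "move_cost g (Compute _) = 1"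
| "move_cost g (DelRed _ _) = 0"
| "move_cost g (DelBlue _) = 0"

fun is_io :: "'a move \<Rightarrow> bool" where
  "is_io (Save _) = True"
| "is_io (Load _) = True"
| "is_io _ = False"

definition valid_config :: "nat \<Rightarrow> nat \<Rightarrow> 'a config \<Rightarrow> bool" where
  "valid_config k r C \<longleftrightarrow> (\<forall>j<k. card (fst C j) \<le> r)"

definition terminal_config :: "'a set \<Rightarrow> ('a \<times> 'a) set \<Rightarrow> nat \<Rightarrow> 'a config \<Rightarrow> bool" where
  "terminal_config V E k C \<longleftrightarrow>
     (\<forall>v\<in>V. (\<forall>w. (v, w) \<notin> E) \<longrightarrow> v \<in> snd C \<union> (\<Union>j<k. fst C j))"

fun strategy_from :: "'a set \<Rightarrow> ('a \<times> 'a) set \<Rightarrow> nat \<Rightarrow> nat \<Rightarrow> 'a config \<Rightarrow> 'a move list \<Rightarrow> bool" where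
  "strategy_from V E k r C [] \<longleftrightarrow> terminal_config V E k C"
| "strategy_from V E k r C (m # ms) \<longleftrightarrow>
     applicable V E k C m \<and> valid_config k r (apply_move C m) \<and>
     strategy_from V E k r (apply_move C m) ms"

definition pebbling_strategy :: "'a set \<Rightarrow> ('a \<times> 'a) set \<Rightarrow> nat \<Rightarrow> nat \<Rightarrow> 'a move list \<Rightarrow> bool" where
  "pebbling_strategy V E k r ms \<longleftrightarrow> strategy_from V E k r init_config ms"

definition strategy_cost :: "nat \<Rightarrow> 'a move list \<Rightarrow> nat" where
  "strategy_cost g ms = (\<Sum>m\<leftarrow>ms. move_cost g m)"

definition num_io :: "'a move list \<Rightarrow> nat" where
  "num_io ms = length (filter is_io ms)"

definition pebblable :: "'a set \<Rightarrow> ('a \<times> 'a) set \<Rightarrow> nat \<Rightarrow> nat \<Rightarrow> bool" where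
  "pebblable V E k r \<longleftrightarrow> (\<exists>ms. pebbling_strategy V E k r ms)"

definition OPT :: "'a set \<Rightarrow> ('a \<times> 'a) set \<Rightarrow> nat \<Rightarrow> nat \<Rightarrow> nat \<Rightarrow> nat" where
  "OPT V E k r g = (LEAST c. \<exists>ms. pebbling_strategy V E k r ms \<and> strategy_cost g ms = c)"

definition OPT_IO :: "'a set \<Rightarrow> ('a \<times> 'a) set \<Rightarrow> nat \<Rightarrow> nat \<Rightarrow> nat \<Rightarrow> nat" where
  "OPT_IO V E k r g = (LEAST t. \<exists>ms. pebbling_strategy V E k r ms \<and>
       strategy_cost g ms = OPT V E k r g \<and> num_io ms = t)"

end

theory Submission
  imports Defs "HOL-Library.Countable"
begin

definition conf :: "'a move list \<Rightarrow> nat \<Rightarrow> 'a config" where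
  "conf ms t = foldl apply_move init_config (take t ms)"

lemma strategy_from_iff:
  "strategy_from V E k r C ms \<longleftrightarrow>
    (\<forall>t<length ms. applicable V E k (foldl apply_move C (take t ms)) (ms!t) \<and>
        valid_config k r (foldl apply_move C (take (Suc t) ms))) \<and>
    terminal_config V E k (foldl apply_move C ms)"
proof (induction ms arbitrary: C)
  case Nil
  then show ?case by simp
next
  case (Cons m ms)
  show ?case
    by (simp add: Cons.IH All_less_Suc2 del: take_Suc)
qed

lemma conf_Suc: "t < length ms \<Longrightarrow> conf ms (Suc t) = apply_move (conf ms t) (ms!t)"
  by (simp add: conf_def take_Suc_conv_app_nth)

lemma conf_0[simp]: "conf ms 0 = init_config"
  by (simp add: conf_def)

lemma strat_step:
  assumes "pebbling_strategy V E k r ms" "t < length ms"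
  shows "applicable V E k (conf ms t) (ms!t)" "valid_config k r (conf ms (Suc t))"
  using assms by (auto simp: pebbling_strategy_def strategy_from_iff conf_def)

lemma strat_term:
  assumes "pebbling_strategy V E k r ms"
  shows "terminal_config V E k (conf ms (length ms))"
  using assms by (auto simp: pebbling_strategy_def strategy_from_iff conf_def)

fun is_comp :: "'a move \<Rightarrow> bool" where
  "is_comp (Compute _) = True" | "is_comp _ = False"

definition ncomp :: "'a move list \<Rightarrow> nat \<Rightarrow> nat" where
  "ncomp ms t = length (filter is_comp (take t ms))"

definition peb :: "'a config \<Rightarrow> 'a set" where
  "peb C = snd C \<union> (\<Union>j. fst C j)"

lemma ncomp_Suc: "t < length ms \<Longrightarrow> ncomp ms (Suc t) = ncomp ms t + (if is_comp (ms!t) then 1 else 0)"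
  by (simp add: ncomp_def take_Suc_conv_app_nth)

lemma add_red_cases: "v \<in> add_red \<sigma> R j \<Longrightarrow> v \<in> R j \<or> \<sigma> j = Some v"
  by (auto simp: add_red_def split: option.splits)

lemma depth_inv:
  assumes strat: "pebbling_strategy V E k r ms"
    and ch: "\<And>i. Suc i \<le> d \<Longrightarrow> (c i, c (Suc i)) \<in> E"
  shows "t \<le> length ms \<Longrightarrow> i \<le> d \<Longrightarrow> c i \<in> peb (conf ms t) \<Longrightarrow> Suc i \<le> ncomp ms t"
proof (induction t arbitrary: i)
  case 0
  then show ?case by (simp add: peb_def init_config_def)
next
  case (Suc t)
  have tl: "t < length ms" using Suc.prems by simp
  have app: "applicable V E k (conf ms t) (ms!t)" using strat_step[OF strat tl] by simp
  obtain R B where C: "conf ms t = (R, B)" by fastforce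
  have cs: "conf ms (Suc t) = apply_move (R,B) (ms!t)" using conf_Suc[OF tl] C by simp
  have IH: "\<And>i. i \<le> d \<Longrightarrow> c i \<in> peb (R,B) \<Longrightarrow> Suc i \<le> ncomp ms t" using Suc.IH tl C by simp
  have nc: "ncomp ms (Suc t) = ncomp ms t + (if is_comp (ms!t) then 1 else 0)" using ncomp_Suc[OF tl] .
  show ?case
  proof (cases "ms!t")
    case (Save \<sigma>)
    have "peb (conf ms (Suc t)) \<subseteq> peb (R,B)"
      using app C Save cs by (auto simp: peb_def ran_def)
    then show ?thesis using IH Suc.prems nc Save by auto
  next
    case (Load \<sigma>)
    have "peb (conf ms (Suc t)) \<subseteq> peb (R,B)"
      using app C Load cs by (auto simp: peb_def ran_def dest!: add_red_cases)
    then show ?thesis using IH Suc.prems nc Load by auto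
  next
    case (Compute \<sigma>)
    have "c i \<in> peb (R,B) \<or> (\<exists>j. \<sigma> j = Some (c i))"
      using Suc.prems(3) C Compute cs by (auto simp: peb_def dest!: add_red_cases)
    then show ?thesis
    proof
      assume "c i \<in> peb (R,B)" then show ?thesis using IH[of i] nc Suc.prems by auto
    next
      assume "\<exists>j. \<sigma> j = Some (c i)"
      then obtain j where j: "\<sigma> j = Some (c i)" by blast
      show ?thesis
      proof (cases i)
        case 0 then show ?thesis using nc Compute by simp
      next
        case (Suc i')
        have "c i' \<in> R j" using app C Compute j ch[of i'] Suc Suc.prems by auto
        then have "c i' \<in> peb (R,B)" by (auto simp: peb_def)
        then show ?thesis using IH[of i'] nc Compute Suc Suc.prems by simp
      qed
    qed
  next
    case (DelRed j v)
    have "peb (conf ms (Suc t)) \<subseteq> peb (R,B)"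
      using DelRed cs by (auto simp: peb_def split: if_splits)
    then show ?thesis using IH Suc.prems nc DelRed by auto
  next
    case (DelBlue v)
    have "peb (conf ms (Suc t)) \<subseteq> peb (R,B)"
      using DelBlue cs by (auto simp: peb_def)
    then show ?thesis using IH Suc.prems nc DelBlue by auto
  qed
qed

lemma cost_ge_ncomp: "length (filter is_comp ms) \<le> strategy_cost g ms"
proof (induction ms)
  case Nil then show ?case by (simp add: strategy_cost_def)
next
  case (Cons m ms) then show ?case by (cases m) (auto simp: strategy_cost_def)
qed

lemma depth_bound:
  assumes strat: "pebbling_strategy V E k r ms"
    and ch: "\<And>i. Suc i \<le> d \<Longrightarrow> (c i, c (Suc i)) \<in> E"
    and sink: "c d \<in> V" "\<And>w. (c d, w) \<notin> E"
  shows "Suc d \<le> strategy_cost g ms"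
proof -
  have "c d \<in> peb (conf ms (length ms))"
    using strat_term[OF strat] sink unfolding terminal_config_def peb_def by blast
  then have "Suc d \<le> ncomp ms (length ms)" using depth_inv[where c=c, OF strat ch] by blast
  then show ?thesis using cost_ge_ncomp[of ms g] by (simp add: ncomp_def)
qed

definition R1 :: "'a move list \<Rightarrow> nat \<Rightarrow> 'a set" where "R1 ms t = fst (conf ms t) 0"
definition B1 :: "'a move list \<Rightarrow> nat \<Rightarrow> 'a set" where "B1 ms t = snd (conf ms t)"

definition comp_at :: "'a move list \<Rightarrow> nat \<Rightarrow> 'a \<Rightarrow> bool" where
  "comp_at ms t v \<longleftrightarrow> t < length ms \<and> (\<exists>\<sigma>. ms!t = Compute \<sigma> \<and> \<sigma> 0 = Some v)"
definition load_at :: "'a move list \<Rightarrow> nat \<Rightarrow> 'a \<Rightarrow> bool" where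
  "load_at ms t v \<longleftrightarrow> t < length ms \<and> (\<exists>\<sigma>. ms!t = Load \<sigma> \<and> \<sigma> 0 = Some v)"

context
  fixes V E r ms
  assumes strat: "pebbling_strategy V E 1 r ms"
begin

lemma red_step:
  assumes tl: "t < length ms" and v: "v \<in> R1 ms (Suc t)" "v \<notin> R1 ms t"
  shows "comp_at ms t v \<or> load_at ms t v"
proof -
  obtain R B where C: "conf ms t = (R, B)" by fastforce
  have cs: "conf ms (Suc t) = apply_move (R,B) (ms!t)" using conf_Suc[OF tl] C by simp
  have app: "applicable V E 1 (R,B) (ms!t)" using strat_step[OF strat tl] C by simp
  show ?thesis
  proof (cases "ms!t")
    case (Save \<sigma>) then show ?thesis using v cs C by (simp add: R1_def)
  next
    case (Load \<sigma>) then show ?thesis using v cs C tl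
      by (auto simp: R1_def load_at_def add_red_def split: option.splits)
  next
    case (Compute \<sigma>) then show ?thesis using v cs C tl
      by (auto simp: R1_def comp_at_def add_red_def split: option.splits)
  next
    case (DelRed j w) then show ?thesis using v cs C by (auto simp: R1_def split: if_splits)
  next
    case (DelBlue w) then show ?thesis using v cs C by (simp add: R1_def)
  qed
qed

lemma red_origin:
  assumes "t \<le> t'" "t' \<le> length ms" "v \<notin> R1 ms t" "v \<in> R1 ms t'"
  shows "\<exists>u. t \<le> u \<and> u < t' \<and> (comp_at ms u v \<or> load_at ms u v)"
  using assms
proof (induction t')
  case 0 then show ?case by simp
next
  case (Suc t')
  show ?case
  proof (cases "v \<in> R1 ms t'")
    case True
    then have "t \<le> t'" using Suc.prems by (metis le_SucE)
    then show ?thesis using Suc True by (metis Suc_leD less_SucI)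
  next
    case False
    then show ?thesis using red_step[of t' v] Suc.prems by (metis Suc_le_lessD le_SucE lessI)
  qed
qed

lemma peb_computed:
  "t \<le> length ms \<Longrightarrow> v \<in> R1 ms t \<union> B1 ms t \<Longrightarrow> \<exists>u<t. comp_at ms u v"
proof (induction t arbitrary: v)
  case 0 then show ?case by (simp add: R1_def B1_def init_config_def)
next
  case (Suc t)
  have tl: "t < length ms" using Suc.prems by simp
  obtain R B where C: "conf ms t = (R, B)" by fastforce
  have cs: "conf ms (Suc t) = apply_move (R,B) (ms!t)" using conf_Suc[OF tl] C by simp
  have app: "applicable V E 1 (R,B) (ms!t)" using strat_step[OF strat tl] C by simp
  have IH: "\<And>w. w \<in> R 0 \<union> B \<Longrightarrow> \<exists>u<t. comp_at ms u w"
    using Suc.IH tl C by (simp add: R1_def B1_def)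
  have IH': "\<And>w. w \<in> R 0 \<union> B \<Longrightarrow> \<exists>u<Suc t. comp_at ms u w"
    using IH less_SucI by blast
  show ?case
  proof (cases "ms!t")
    case (Save \<sigma>)
    have "v \<in> R 0 \<union> B"
    proof -
      have "v \<in> R 0 \<union> B \<union> ran \<sigma>" using Suc.prems cs C Save by (simp add: R1_def B1_def)
      moreover have "ran \<sigma> \<subseteq> R 0" using app Save by (auto simp: ran_def)
      ultimately show ?thesis by blast
    qed
    then show ?thesis using IH' by blast
  next
    case (Load \<sigma>)
    have "v \<in> R 0 \<union> B"
      using Suc.prems cs C Load app by (auto simp: R1_def B1_def add_red_def ran_def split: option.splits)
    then show ?thesis using IH' by blast
  next
    case (Compute \<sigma>)
    have "v \<in> R 0 \<union> B \<or> \<sigma> 0 = Some v"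
      using Suc.prems cs C Compute by (auto simp: R1_def B1_def add_red_def split: option.splits)
    then show ?thesis using IH' Compute tl by (auto simp: comp_at_def)
  next
    case (DelRed j w)
    have "v \<in> R 0 \<union> B"
      using Suc.prems cs C DelRed by (auto simp: R1_def B1_def split: if_splits)
    then show ?thesis using IH' by blast
  next
    case (DelBlue w)
    have "v \<in> R 0 \<union> B"
      using Suc.prems cs C DelBlue by (auto simp: R1_def B1_def)
    then show ?thesis using IH' by blast
  qed
qed

lemma comp_parent: "comp_at ms u v \<Longrightarrow> (w, v) \<in> E \<Longrightarrow> w \<in> R1 ms u"
proof -
  assume a: "comp_at ms u v" "(w,v) \<in> E"
  then obtain \<sigma> where s: "u < length ms" "ms!u = Compute \<sigma>" "\<sigma> 0 = Some v" by (auto simp: comp_at_def)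
  obtain R B where C: "conf ms u = (R, B)" by fastforce
  have app: "applicable V E 1 (R,B) (ms!u)" using strat_step[OF strat s(1)] C by simp
  then show ?thesis using s a C by (auto simp: R1_def)
qed

lemma comp_in_V: "comp_at ms u v \<Longrightarrow> v \<in> V"
proof -
  assume a: "comp_at ms u v"
  then obtain \<sigma> where s: "u < length ms" "ms!u = Compute \<sigma>" "\<sigma> 0 = Some v" by (auto simp: comp_at_def)
  obtain R B where C: "conf ms u = (R, B)" by fastforce
  have app: "applicable V E 1 (R,B) (ms!u)" using strat_step[OF strat s(1)] C by simp
  then show ?thesis using s C by auto
qed

lemma all_computed:
  assumes s: "s \<in> V" "\<And>w. (s, w) \<notin> E" and p: "(v, s) \<in> E\<^sup>*"
  shows "\<exists>u. comp_at ms u v"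
  using p
proof (induction rule: converse_rtrancl_induct)
  case base
  have "s \<in> R1 ms (length ms) \<union> B1 ms (length ms)"
    using strat_term[OF strat] s unfolding terminal_config_def R1_def B1_def by auto
  then show ?case using peb_computed by blast
next
  case (step y z)
  then obtain u where u: "comp_at ms u z" by blast
  then have "y \<in> R1 ms u" using comp_parent step by blast
  moreover have "u \<le> length ms" using u by (simp add: comp_at_def)
  ultimately show ?case using peb_computed by blast
qed

lemma fin_red: "t \<le> length ms \<Longrightarrow> finite (fst (conf ms t) j)"
proof (induction t)
  case 0 then show ?case by (simp add: init_config_def)
next
  case (Suc t)
  have tl: "t < length ms" using Suc.prems by simp
  obtain R B where C: "conf ms t = (R, B)" by fastforce
  have cs: "conf ms (Suc t) = apply_move (R,B) (ms!t)" using conf_Suc[OF tl] C by simp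
  have f: "finite (R j)" using Suc C tl by simp
  show ?case
    by (cases "ms!t") (use f cs in \<open>auto simp: add_red_def split: option.splits\<close>)
qed

lemma comp_red: "comp_at ms u v \<Longrightarrow> v \<in> R1 ms (Suc u)"
proof -
  assume a: "comp_at ms u v"
  then obtain \<sigma> where s: "u < length ms" "ms!u = Compute \<sigma>" "\<sigma> 0 = Some v" by (auto simp: comp_at_def)
  obtain R B where C: "conf ms u = (R, B)" by fastforce
  show ?thesis using conf_Suc[OF s(1)] C s by (simp add: R1_def add_red_def)
qed

lemma valid_R1: "t < length ms \<Longrightarrow> card (R1 ms (Suc t)) \<le> r"
  using strat_step(2)[OF strat] by (simp add: valid_config_def R1_def)

lemma back_walk:
  assumes ch: "\<And>p. Suc p \<le> M \<Longrightarrow> (y p, y (Suc p)) \<in> E"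
    and noload: "\<And>u p. p \<le> M \<Longrightarrow> \<not> load_at ms u (y p)"
  shows "q \<le> M \<Longrightarrow> a \<le> q \<Longrightarrow> y q \<in> R1 ms t' \<Longrightarrow> t \<le> t' \<Longrightarrow> t' \<le> length ms \<Longrightarrow>
     (\<forall>p. a \<le> p \<and> p \<le> q \<longrightarrow> y p \<notin> R1 ms t) \<Longrightarrow>
     a \<le> p \<Longrightarrow> p \<le> q \<Longrightarrow> \<exists>u. t \<le> u \<and> u < t' \<and> comp_at ms u (y p)"
proof (induction q arbitrary: t' p)
  case 0
  then have "y 0 \<notin> R1 ms t" by auto
  then obtain u where "t \<le> u" "u < t'" "comp_at ms u (y 0) \<or> load_at ms u (y 0)"
    using red_origin[of t t' "y 0"] 0 by auto
  then show ?case using noload 0 by auto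
next
  case (Suc q)
  have "y (Suc q) \<notin> R1 ms t" using Suc.prems by auto
  then obtain u where u: "t \<le> u" "u < t'" "comp_at ms u (y (Suc q)) \<or> load_at ms u (y (Suc q))"
    using red_origin[of t t' "y (Suc q)"] Suc.prems by auto
  then have cu: "comp_at ms u (y (Suc q))" using noload Suc.prems by auto
  show ?case
  proof (cases "p = Suc q")
    case True then show ?thesis using u cu by auto
  next
    case False
    then have pq: "p \<le> q" "a \<le> q" using Suc.prems by auto
    have "y q \<in> R1 ms u" using comp_parent[OF cu ch] Suc.prems by simp
    then obtain u' where "t \<le> u'" "u' < u" "comp_at ms u' (y p)"
      using Suc.IH[of u p] pq u Suc.prems by auto
    then show ?thesis using u by auto
  qed
qed

end

lemma cost_formula: "strategy_cost g ms = length (filter is_comp ms) + g * num_io ms"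
proof (induction ms)
  case Nil then show ?case by (simp add: strategy_cost_def num_io_def)
next
  case (Cons m ms) then show ?case by (cases m) (auto simp: strategy_cost_def num_io_def)
qed

lemma ncomp_count:
  assumes fin: "finite V" and inV: "\<And>u v. comp_at ms u v \<Longrightarrow> v \<in> V"
  shows "(\<Sum>v\<in>V. card {u. comp_at ms u v}) \<le> length (filter is_comp ms)"
proof -
  have fs: "\<And>v. finite {u. comp_at ms u v}"
    by (rule finite_subset[of _ "{..<length ms}"]) (auto simp: comp_at_def)
  have "(\<Sum>v\<in>V. card {u. comp_at ms u v}) = card (\<Union>v\<in>V. {u. comp_at ms u v})"
    by (rule card_UN_disjoint[symmetric]) (auto simp: fin fs comp_at_def)
  also have "\<dots> \<le> card {i. i < length ms \<and> is_comp (ms!i)}"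
    by (rule card_mono) (auto simp: comp_at_def)
  finally show ?thesis by (simp add: length_filter_conv_card)
qed

lemma nload_count:
  "card {u. \<exists>v. load_at ms u v} \<le> num_io ms"
proof -
  have "card {u. \<exists>v. load_at ms u v} \<le> card {i. i < length ms \<and> is_io (ms!i)}"
    by (rule card_mono) (auto simp: load_at_def)
  then show ?thesis by (simp add: num_io_def length_filter_conv_card)
qed

fun runs :: "'a set \<Rightarrow> ('a\<times>'a) set \<Rightarrow> nat \<Rightarrow> nat \<Rightarrow> 'a config \<Rightarrow> 'a move list \<Rightarrow> 'a config \<Rightarrow> bool" where
  "runs V E k r C [] C' \<longleftrightarrow> C' = C"
| "runs V E k r C (m#ms) C' \<longleftrightarrow> applicable V E k C m \<and> valid_config k r (apply_move C m) \<and> runs V E k r (apply_move C m) ms C'"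

lemma runs_app: "runs V E k r C a C1 \<Longrightarrow> runs V E k r C1 b C2 \<Longrightarrow> runs V E k r C (a@b) C2"
  by (induction a arbitrary: C) auto

lemma runs_strat: "runs V E k r C ms C' \<Longrightarrow> terminal_config V E k C' \<Longrightarrow> strategy_from V E k r C ms"
  by (induction ms arbitrary: C) auto

fun tok :: "'a set \<Rightarrow> ('a\<times>'a) set \<Rightarrow> nat \<Rightarrow> 'a set \<Rightarrow> ('a \<times> 'a list) list \<Rightarrow> 'a set \<Rightarrow> bool" where
  "tok V E r R [] R' \<longleftrightarrow> R' = R"
| "tok V E r R ((a,ds)#p) R' \<longleftrightarrow> a \<in> V \<and> (\<forall>u. (u,a) \<in> E \<longrightarrow> u \<in> R) \<and> card (insert a R) \<le> r \<and>
      distinct ds \<and> set ds \<subseteq> insert a R \<and> tok V E r (insert a R - set ds) p R'"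

lemma tok_app: "tok V E r R p Q1 \<Longrightarrow> tok V E r Q1 q Q2 \<Longrightarrow> tok V E r R (p@q) Q2"
  by (induction p arbitrary: R) auto

lemma tok_mono: "tok V E r R p Q1 \<Longrightarrow> r \<le> r' \<Longrightarrow> tok V E r' R p Q1"
  by (induction p arbitrary: R) auto

lemma tok_fin: "tok V E r R p Q1 \<Longrightarrow> finite R \<Longrightarrow> finite Q1"
  by (induction p arbitrary: R) auto

definition F2 :: "'a set \<Rightarrow> 'a set \<Rightarrow> nat \<Rightarrow> 'a set" where
  "F2 A B = (\<lambda>j. if j = 0 then A else if j = 1 then B else {})"

lemma F2_0: "F2 A B 0 = A" and F2_1: "F2 A B 1 = B" by (auto simp: F2_def)

fun zmv :: "('a \<times> 'a list) \<Rightarrow> ('a \<times> 'a list) \<Rightarrow> 'a move list" where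
  "zmv (a,ds) (b,es) = Compute (\<lambda>j. if j = 0 then Some a else if j = 1 then Some b else None)
     # map (DelRed 0) ds @ map (DelRed 1) es"

definition zipm :: "('a \<times> 'a list) list \<Rightarrow> ('a \<times> 'a list) list \<Rightarrow> 'a move list" where
  "zipm p q = concat (map (\<lambda>(x,y). zmv x y) (zip p q))"

lemma dels_runs:
  "j < k \<Longrightarrow> distinct ds \<Longrightarrow> set ds \<subseteq> Rf j \<Longrightarrow> valid_config k r (Rf,B) \<Longrightarrow> finite (Rf j) \<Longrightarrow>
   runs V E k r (Rf,B) (map (DelRed j) ds) (Rf(j := Rf j - set ds), B)"
proof (induction ds arbitrary: Rf)
  case Nil then show ?case by simp
next
  case (Cons d ds)
  let ?Rf = "Rf(j := Rf j - {d})"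
  have v: "valid_config k r (?Rf, B)" using Cons.prems(4)
    unfolding valid_config_def by (simp add: le_trans[OF card_Diff1_le])
  have p1: "set ds \<subseteq> ?Rf j" "finite (?Rf j)" using Cons.prems by auto
  have IHf: "runs V E k r (?Rf,B) (map (DelRed j) ds) (?Rf(j := ?Rf j - set ds), B)"
  proof (rule Cons.IH[of ?Rf])
    show "j < k" using Cons.prems by simp
    show "distinct ds" using Cons.prems by simp
    show "set ds \<subseteq> ?Rf j" using Cons.prems by auto
    show "valid_config k r (?Rf, B)" by (rule v)
    show "finite (?Rf j)" using Cons.prems by simp
  qed
  have eq: "?Rf(j := ?Rf j - set ds) = Rf(j := Rf j - set (d#ds))" by (auto simp: fun_eq_iff)
  have step: "runs V E k r (Rf,B) [DelRed j d] (?Rf, B)" using Cons.prems v by simp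
  have "runs V E k r (Rf,B) ([DelRed j d] @ map (DelRed j) ds) (Rf(j := Rf j - set (d#ds)), B)"
    by (rule runs_app[OF step IHf[unfolded eq]])
  then show ?case by (simp only: append_Cons append_Nil list.map)
qed

lemma zip_runs:
  "length p = length q \<Longrightarrow> tok V E r Q0 p Q0' \<Longrightarrow> tok V E r Q1 q Q1' \<Longrightarrow> finite Q0 \<Longrightarrow> finite Q1 \<Longrightarrow>
   card Q0 \<le> r \<Longrightarrow> card Q1 \<le> r \<Longrightarrow> runs V E 2 r (F2 Q0 Q1, B) (zipm p q) (F2 Q0' Q1', B)"
proof (induction p q arbitrary: Q0 Q1 rule: list_induct2)
  case Nil then show ?case by (simp add: zipm_def)
next
  case (Cons x p y q)
  obtain a ds where x: "x = (a,ds)" by fastforce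
  obtain b es where y: "y = (b,es)" by fastforce
  let ?\<sigma> = "(\<lambda>j. if j = 0 then Some a else if j = 1 then Some b else None)"
  have t0: "a \<in> V" "\<forall>u. (u,a) \<in> E \<longrightarrow> u \<in> Q0" "card (insert a Q0) \<le> r" "distinct ds" "set ds \<subseteq> insert a Q0"
    "tok V E r (insert a Q0 - set ds) p Q0'" using Cons.prems x by auto
  have t1: "b \<in> V" "\<forall>u. (u,b) \<in> E \<longrightarrow> u \<in> Q1" "card (insert b Q1) \<le> r" "distinct es" "set es \<subseteq> insert b Q1"
    "tok V E r (insert b Q1 - set es) q Q1'" using Cons.prems y by auto
  have app: "applicable V E 2 (F2 Q0 Q1, B) (Compute ?\<sigma>)"
    using t0 t1 by (auto simp: F2_def dom_def)
  have am: "apply_move (F2 Q0 Q1, B) (Compute ?\<sigma>) = (F2 (insert a Q0) (insert b Q1), B)"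
    by (auto simp: F2_def add_red_def fun_eq_iff)
  have v1: "valid_config 2 r (F2 (insert a Q0) (insert b Q1), B)"
    using t0 t1 by (auto simp: valid_config_def F2_def less_2_cases_iff)
  have r1: "runs V E 2 r (F2 (insert a Q0) (insert b Q1), B) (map (DelRed 0) ds)
      ((F2 (insert a Q0) (insert b Q1))(0 := insert a Q0 - set ds), B)"
  proof -
    have "runs V E 2 r (F2 (insert a Q0) (insert b Q1), B) (map (DelRed 0) ds)
      ((F2 (insert a Q0) (insert b Q1))(0 := F2 (insert a Q0) (insert b Q1) 0 - set ds), B)"
      by (rule dels_runs) (use t0 v1 Cons.prems in \<open>auto simp: F2_def\<close>)
    then show ?thesis by (simp only: F2_0 F2_1)
  qed
  have e1: "(F2 (insert a Q0) (insert b Q1))(0 := insert a Q0 - set ds) = F2 (insert a Q0 - set ds) (insert b Q1)"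
    by (auto simp: F2_def fun_eq_iff)
  have v2: "valid_config 2 r (F2 (insert a Q0 - set ds) (insert b Q1), B)"
    using v1 Cons.prems by (auto simp: valid_config_def F2_def less_2_cases_iff intro: le_trans[OF card_mono])
  have r2: "runs V E 2 r (F2 (insert a Q0 - set ds) (insert b Q1), B) (map (DelRed 1) es)
      ((F2 (insert a Q0 - set ds) (insert b Q1))(1 := insert b Q1 - set es), B)"
  proof -
    have "runs V E 2 r (F2 (insert a Q0 - set ds) (insert b Q1), B) (map (DelRed 1) es)
      ((F2 (insert a Q0 - set ds) (insert b Q1))(1 := F2 (insert a Q0 - set ds) (insert b Q1) 1 - set es), B)"
      by (rule dels_runs) (use t1 v2 Cons.prems in \<open>auto simp: F2_def\<close>)
    then show ?thesis by (simp only: F2_0 F2_1)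
  qed
  have e2: "(F2 (insert a Q0 - set ds) (insert b Q1))(1 := insert b Q1 - set es) = F2 (insert a Q0 - set ds) (insert b Q1 - set es)"
    by (auto simp: F2_def fun_eq_iff)
  have r3: "runs V E 2 r (F2 (insert a Q0 - set ds) (insert b Q1 - set es), B) (zipm p q) (F2 Q0' Q1', B)"
    apply (rule Cons.IH)
    using t0 t1 Cons.prems by (auto intro: le_trans[OF card_mono])
  have "zipm (x#p) (y#q) = (Compute ?\<sigma> # map (DelRed 0) ds @ map (DelRed 1) es) @ zipm p q"
    by (simp add: zipm_def x y)
  moreover have "runs V E 2 r (F2 Q0 Q1, B) (Compute ?\<sigma> # map (DelRed 0) ds @ map (DelRed 1) es)
       (F2 (insert a Q0 - set ds) (insert b Q1 - set es), B)"
  proof -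
    have "runs V E 2 r (F2 Q0 Q1, B) [Compute ?\<sigma>] (F2 (insert a Q0) (insert b Q1), B)"
      using app am v1 by simp
    moreover have "runs V E 2 r (F2 (insert a Q0) (insert b Q1), B) (map (DelRed 0) ds @ map (DelRed 1) es)
       (F2 (insert a Q0 - set ds) (insert b Q1 - set es), B)"
      using runs_app[OF r1[unfolded e1] r2[unfolded e2]] .
    ultimately have "runs V E 2 r (F2 Q0 Q1, B) ([Compute ?\<sigma>] @ (map (DelRed 0) ds @ map (DelRed 1) es))
       (F2 (insert a Q0 - set ds) (insert b Q1 - set es), B)" by (rule runs_app)
    then show ?thesis by (simp only: append_Cons append_Nil)
  qed
  ultimately show ?case using runs_app[OF _ r3] by (simp only:)
qed

datatype 'a step = SC 'a | SS 'a | SL 'a | SD 'a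

fun sok :: "'a set \<Rightarrow> ('a\<times>'a) set \<Rightarrow> nat \<Rightarrow> 'a set \<Rightarrow> 'a set \<Rightarrow> 'a step list \<Rightarrow> 'a set \<Rightarrow> 'a set \<Rightarrow> bool" where
  "sok V E r R B [] R' B' \<longleftrightarrow> R' = R \<and> B' = B"
| "sok V E r R B (SC a # s) R' B' \<longleftrightarrow> a \<in> V \<and> (\<forall>u. (u,a) \<in> E \<longrightarrow> u \<in> R) \<and> card (insert a R) \<le> r \<and> sok V E r (insert a R) B s R' B'"
| "sok V E r R B (SS a # s) R' B' \<longleftrightarrow> a \<in> R \<and> sok V E r R (insert a B) s R' B'"
| "sok V E r R B (SL a # s) R' B' \<longleftrightarrow> a \<in> B \<and> card (insert a R) \<le> r \<and> sok V E r (insert a R) B s R' B'"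
| "sok V E r R B (SD a # s) R' B' \<longleftrightarrow> a \<in> R \<and> sok V E r (R - {a}) B s R' B'"

lemma sok_app: "sok V E r R B p Q1 P1 \<Longrightarrow> sok V E r Q1 P1 q Q2 P2 \<Longrightarrow> sok V E r R B (p@q) Q2 P2"
proof (induction p arbitrary: R B)
  case Nil then show ?case by simp
next
  case (Cons s p) then show ?case by (cases s) simp_all
qed

definition F1 :: "'a set \<Rightarrow> nat \<Rightarrow> 'a set" where "F1 A = (\<lambda>j. if j = 0 then A else {})"

fun mv1 :: "'a step \<Rightarrow> 'a move" where
  "mv1 (SC a) = Compute (\<lambda>j. if j = 0 then Some a else None)"
| "mv1 (SS a) = Save (\<lambda>j. if j = 0 then Some a else None)"
| "mv1 (SL a) = Load (\<lambda>j. if j = 0 then Some a else None)"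
| "mv1 (SD a) = DelRed 0 a"

lemma dom1: "dom (\<lambda>j::nat. if j = 0 then Some a else None) = {0}"
  by (auto simp: dom_def)
lemma ran1: "ran (\<lambda>j::nat. if j = 0 then Some a else None) = {a}"
  by (auto simp: ran_def)
lemma addred1: "add_red (\<lambda>j. if j = 0 then Some a else None) (F1 R) = F1 (insert a R)"
  by (auto simp: add_red_def F1_def fun_eq_iff)

lemma sok_runs: "sok V E r R B s R' B' \<Longrightarrow> card R \<le> r \<Longrightarrow>
   runs V E 1 r (F1 R, B) (map mv1 s) (F1 R', B')"
proof (induction s arbitrary: R B)
  case Nil then show ?case by simp
next
  case (Cons st s)
  show ?case
  proof (cases st)
    case (SC a)
    have h: "a \<in> V" "\<forall>u. (u,a) \<in> E \<longrightarrow> u \<in> R" "card (insert a R) \<le> r" "sok V E r (insert a R) B s R' B'"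
      using Cons.prems SC by auto
    have IH: "runs V E 1 r (F1 (insert a R), B) (map mv1 s) (F1 R', B')" using Cons.IH[OF h(4) h(3)] .
    have ap: "applicable V E 1 (F1 R, B) (mv1 (SC a))" using h by (simp add: F1_def dom1)
    have am: "apply_move (F1 R, B) (mv1 (SC a)) = (F1 (insert a R), B)" by (simp add: addred1)
    have va: "valid_config 1 r (F1 (insert a R), B)" using h by (simp add: valid_config_def F1_def)
    have "runs V E 1 r (F1 R, B) (mv1 (SC a) # map mv1 s) (F1 R', B')"
      unfolding runs.simps am using ap va IH by blast
    then show ?thesis by (simp only: SC list.map)
  next
    case (SS a)
    have h: "a \<in> R" "sok V E r R (insert a B) s R' B'" using Cons.prems SS by auto
    have IH: "runs V E 1 r (F1 R, insert a B) (map mv1 s) (F1 R', B')" using Cons.IH[OF h(2) Cons.prems(2)] .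
    have ap: "applicable V E 1 (F1 R, B) (mv1 (SS a))" using h by (simp add: F1_def dom1)
    have am: "apply_move (F1 R, B) (mv1 (SS a)) = (F1 R, insert a B)" by (simp add: ran1)
    have va: "valid_config 1 r (F1 R, insert a B)" using Cons.prems by (simp add: valid_config_def F1_def)
    have "runs V E 1 r (F1 R, B) (mv1 (SS a) # map mv1 s) (F1 R', B')"
      unfolding runs.simps am using ap va IH by blast
    then show ?thesis by (simp only: SS list.map)
  next
    case (SL a)
    have h: "a \<in> B" "card (insert a R) \<le> r" "sok V E r (insert a R) B s R' B'" using Cons.prems SL by auto
    have IH: "runs V E 1 r (F1 (insert a R), B) (map mv1 s) (F1 R', B')" using Cons.IH[OF h(3) h(2)] .
    have ap: "applicable V E 1 (F1 R, B) (mv1 (SL a))" using h by (simp add: dom1 ran1)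
    have am: "apply_move (F1 R, B) (mv1 (SL a)) = (F1 (insert a R), B)" by (simp add: addred1)
    have va: "valid_config 1 r (F1 (insert a R), B)" using h by (simp add: valid_config_def F1_def)
    have "runs V E 1 r (F1 R, B) (mv1 (SL a) # map mv1 s) (F1 R', B')"
      unfolding runs.simps am using ap va IH by blast
    then show ?thesis by (simp only: SL list.map)
  next
    case (SD a)
    have h: "a \<in> R" "sok V E r (R - {a}) B s R' B'" using Cons.prems SD by auto
    have c: "card (R - {a}) \<le> r" using Cons.prems(2) card_Diff1_le[of R a] by linarith
    have IH: "runs V E 1 r (F1 (R - {a}), B) (map mv1 s) (F1 R', B')" using Cons.IH[OF h(2) c] .
    have ap: "applicable V E 1 (F1 R, B) (mv1 (SD a))" using h by (simp add: F1_def)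
    have am: "apply_move (F1 R, B) (mv1 (SD a)) = (F1 (R - {a}), B)" by (auto simp: F1_def fun_eq_iff)
    have va: "valid_config 1 r (F1 (R - {a}), B)" using c by (simp add: valid_config_def F1_def)
    have "runs V E 1 r (F1 R, B) (mv1 (SD a) # map mv1 s) (F1 R', B')"
      unfolding runs.simps am using ap va IH by blast
    then show ?thesis by (simp only: SD list.map)
  qed
qed

fun t2s :: "('a \<times> 'a list) \<Rightarrow> 'a step list" where
  "t2s (a, ds) = SC a # map SD ds"

lemma sdels: "distinct ds \<Longrightarrow> set ds \<subseteq> R \<Longrightarrow> sok V E r R B (map SD ds) (R - set ds) B"
proof (induction ds arbitrary: R)
  case Nil then show ?case by simp
next
  case (Cons d ds)
  have "sok V E r (R - {d}) B (map SD ds) (R - {d} - set ds) B" using Cons.prems by (intro Cons.IH) auto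
  moreover have "R - {d} - set ds = R - set (d#ds)" by auto
  ultimately show ?case using Cons by simp
qed

lemma tok_sok: "tok V E r R p R' \<Longrightarrow> sok V E r R B (concat (map t2s p)) R' B"
proof (induction p arbitrary: R)
  case Nil then show ?case by simp
next
  case (Cons x p)
  obtain a ds where x: "x = (a,ds)" by fastforce
  have "sok V E r (insert a R) B (map SD ds) (insert a R - set ds) B"
    using Cons.prems x by (intro sdels) auto
  then have "sok V E r R B (SC a # map SD ds) (insert a R - set ds) B" using Cons.prems x by auto
  then show ?case using Cons x sok_app by fastforce
qed

definition Emap :: "('a \<Rightarrow> 'b) \<Rightarrow> ('a\<times>'a) set \<Rightarrow> ('b\<times>'b) set" where
  "Emap f E = (\<lambda>(a,b). (f a, f b)) ` E"

lemma Emap_iff: "inj f \<Longrightarrow> (f a, f b) \<in> Emap f E \<longleftrightarrow> (a,b) \<in> E"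
  by (auto simp: Emap_def inj_eq)

lemma Emap_in: "(u, w) \<in> Emap f E \<Longrightarrow> \<exists>a b. u = f a \<and> w = f b \<and> (a,b) \<in> E"
  by (auto simp: Emap_def)

lemma tok_map: "inj f \<Longrightarrow> tok V E r R p R' \<Longrightarrow>
   tok (f ` V) (Emap f E) r (f ` R) (map (\<lambda>(a,ds). (f a, map f ds)) p) (f ` R')"
proof (induction p arbitrary: R)
  case Nil then show ?case by simp
next
  case (Cons x p)
  obtain a ds where x: "x = (a,ds)" by fastforce
  have h: "a \<in> V" "\<forall>u. (u,a) \<in> E \<longrightarrow> u \<in> R" "card (insert a R) \<le> r" "distinct ds" "set ds \<subseteq> insert a R"
    "tok V E r (insert a R - set ds) p R'" using Cons.prems x by auto
  have "f ` (insert a R - set ds) = insert (f a) (f ` R) - set (map f ds)"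
    using Cons.prems(1) by (auto simp: inj_eq)
  moreover have "card (insert (f a) (f ` R)) = card (insert a R)"
    using card_image[of f "insert a R"] Cons.prems(1) by (simp add: inj_on_def)
  moreover have "\<forall>u. (u, f a) \<in> Emap f E \<longrightarrow> u \<in> f ` R"
    using h(2) Cons.prems(1) by (auto simp: Emap_def inj_eq)
  moreover have "distinct (map f ds)" using h(4) Cons.prems(1) by (simp add: distinct_map inj_on_def)
  ultimately show ?case using Cons.IH[of "insert a R - set ds"] Cons.prems h x by auto
qed

fun smap :: "('a \<Rightarrow> 'b) \<Rightarrow> 'a step \<Rightarrow> 'b step" where
  "smap f (SC a) = SC (f a)" | "smap f (SS a) = SS (f a)" | "smap f (SL a) = SL (f a)" | "smap f (SD a) = SD (f a)"

lemma sok_map: "inj f \<Longrightarrow> sok V E r R B s R' B' \<Longrightarrow>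
   sok (f ` V) (Emap f E) r (f ` R) (f ` B) (map (smap f) s) (f ` R') (f ` B')"
proof (induction s arbitrary: R B)
  case Nil then show ?case by simp
next
  case (Cons st s)
  have ci: "\<And>a R. card (insert (f a) (f ` R)) = card (insert a R)"
    using Cons.prems(1) by (metis card_image image_insert inj_def inj_on_def)
  show ?case
  proof (cases st)
    case (SC a)
    have "\<forall>u. (u, f a) \<in> Emap f E \<longrightarrow> u \<in> f ` R"
      using Cons.prems SC by (auto simp: Emap_def inj_eq)
    moreover have "sok (f ` V) (Emap f E) r (f ` insert a R) (f ` B) (map (smap f) s) (f ` R') (f ` B')"
      using Cons.IH[of "insert a R" B] Cons.prems SC by auto
    ultimately show ?thesis using Cons.prems SC ci by auto
  next
    case (SS a) then show ?thesis using Cons.IH[of R "insert a B"] Cons.prems by auto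
  next
    case (SL a) then show ?thesis using Cons.IH[of "insert a R" B] Cons.prems ci by (auto simp: inj_eq)
  next
    case (SD a)
    have "f ` (R - {a}) = f ` R - {f a}" using Cons.prems(1) by (auto simp: inj_eq)
    then show ?thesis using Cons.IH[of "R - {a}" B] Cons.prems SD by auto
  qed
qed

definition Kc :: nat where "Kc = 7"
definition Lc :: nat where "Lc = 24"
definition Nc :: nat where "Nc = Kc * Lc"
definition Pidx :: "nat \<Rightarrow> nat" where "Pidx i = (Kc - i) * Lc - 1"
definition T2 :: nat where "T2 = (\<Sum>i<Kc. (Kc - i) * Lc + 1)"
definition Dd :: "nat \<Rightarrow> nat" where "Dd G = G * T2"

lemma Kc_ge: "2 \<le> Kc" and Lc_ge: "1 \<le> Lc" by (auto simp: Kc_def Lc_def)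

lemma Pi_lt: "i < Kc \<Longrightarrow> Pidx i < Nc"
proof -
  assume "i < Kc"
  then have a: "1 \<le> (Kc - i) * Lc" using Lc_ge by simp
  have b: "(Kc - i) * Lc \<le> Kc * Lc" by simp
  have "(Kc - i) * Lc - 1 < Kc * Lc" using a b by arith
  then show ?thesis by (simp add: Pidx_def Nc_def)
qed

lemma Pi_inj: "i < Kc \<Longrightarrow> i' < Kc \<Longrightarrow> Pidx i = Pidx i' \<Longrightarrow> i = i'"
proof -
  assume a: "i < Kc" "i' < Kc" "Pidx i = Pidx i'"
  have "1 \<le> (Kc - i) * Lc" "1 \<le> (Kc - i') * Lc" using a Lc_ge by simp_all
  moreover have "(Kc - i) * Lc - 1 = (Kc - i') * Lc - 1" using a(3) by (simp add: Pidx_def)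
  ultimately have "(Kc - i) * Lc = (Kc - i') * Lc" by arith
  then have "Kc - i = Kc - i'" using Lc_ge by simp
  then show ?thesis using a by simp
qed

lemma Pi_0: "Pidx 0 = Nc - 1" by (simp add: Pidx_def Nc_def)

lemma T2_ge: "1 \<le> T2"
proof -
  have "0 \<in> {..<Kc}" using Kc_ge by simp
  then have "(\<Sum>i\<in>{0}. (Kc - i) * Lc + 1) \<le> (\<Sum>i<Kc. (Kc - i) * Lc + 1)"
    by (intro sum_mono2) auto
  then show ?thesis by (simp add: T2_def)
qed

lemma Dd_ge: "1 \<le> G \<Longrightarrow> 1 \<le> Dd G" using T2_ge by (simp add: Dd_def)

datatype node = Cn nat | Yn nat nat | Wn nat nat

instance node :: countable by countable_datatype

fun inVn :: "nat \<Rightarrow> node \<Rightarrow> bool" where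
  "inVn G (Cn t) = (t < Dd G)"
| "inVn G (Yn g p) = (g < G \<and> p < Nc)"
| "inVn G (Wn g i) = (g < G \<and> i < Kc)"

fun edge :: "nat \<Rightarrow> node \<Rightarrow> node \<Rightarrow> bool" where
  "edge G (Cn t) b = (b = Cn (Suc t) \<and> Suc t < Dd G)"
| "edge G (Yn g p) b = (g < G \<and> ((Suc p < Nc \<and> b = Yn g (Suc p)) \<or> (\<exists>i<Kc. p = Pidx i \<and> b = Wn g i)))"
| "edge G (Wn g i) b = ((Suc i < Kc \<and> g < G \<and> b = Wn g (Suc i)) \<or> (Suc i = Kc \<and> Suc g < G \<and> b = Wn (Suc g) 0))"

definition Vn :: "nat \<Rightarrow> node set" where "Vn G = {a. inVn G a}"
definition En :: "nat \<Rightarrow> (node \<times> node) set" where "En G = {(a,b). edge G a b}"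

lemma par_C: "edge G a (Cn t) \<longleftrightarrow> (\<exists>t'. a = Cn t' \<and> t = Suc t' \<and> t < Dd G)"
  by (cases a) auto

lemma par_Y: "edge G a (Yn g p) \<longleftrightarrow> (\<exists>p'. a = Yn g p' \<and> p = Suc p' \<and> p < Nc \<and> g < G)"
  by (cases a) auto

lemma par_W: "edge G a (Wn g i) \<longleftrightarrow>
   (g < G \<and> i < Kc \<and> a = Yn g (Pidx i)) \<or> (\<exists>i'. a = Wn g i' \<and> i = Suc i' \<and> i < Kc \<and> g < G)
   \<or> (\<exists>g'. a = Wn g' (Kc - 1) \<and> g = Suc g' \<and> i = 0 \<and> g < G)"
  using Kc_ge by (cases a) auto

lemma edge_V: "edge G a b \<Longrightarrow> inVn G a \<and> inVn G b"
  using Kc_ge Pi_lt by (cases a; cases b) auto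

fun rk :: "node \<Rightarrow> nat" where
  "rk (Cn t) = t"
| "rk (Yn g p) = g * (Nc + Kc) + p"
| "rk (Wn g i) = g * (Nc + Kc) + Nc + i"

lemma rk_edge: assumes e: "edge G a b" shows "rk a < rk b"
proof (cases a)
  case (Cn t) then show ?thesis using e by auto
next
  case (Yn g p)
  then show ?thesis using e Pi_lt by (auto simp: less_imp_le trans_less_add1)
next
  case (Wn g i)
  then show ?thesis using e by (auto simp: algebra_simps)
qed

lemma acyclic_rank: "(\<And>a b. (a,b) \<in> E \<Longrightarrow> f a < (f b :: nat)) \<Longrightarrow> acyclic E"
proof -
  assume h: "\<And>a b. (a,b) \<in> E \<Longrightarrow> f a < f b"
  have "(a,b) \<in> E\<^sup>+ \<Longrightarrow> f a < f b" for a b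
    by (induction rule: trancl_induct) (auto dest: h)
  then show ?thesis unfolding acyclic_def by blast
qed

definition Vnat :: "nat \<Rightarrow> nat set" where "Vnat G = to_nat ` Vn G"
definition Enat :: "nat \<Rightarrow> (nat \<times> nat) set" where "Enat G = Emap to_nat (En G)"

lemma inj_to_nat': "inj (to_nat :: node \<Rightarrow> nat)" by (rule inj_to_nat)

lemma Enat_iff[simp]: "(to_nat a, to_nat b) \<in> Enat G \<longleftrightarrow> edge G a b"
  by (simp add: Enat_def Emap_iff[OF inj_to_nat'] En_def)

lemma Vnat_iff[simp]: "to_nat a \<in> Vnat G \<longleftrightarrow> inVn G a"
  by (auto simp: Vnat_def Vn_def inj_eq[OF inj_to_nat'])

lemma Enat_in: "(u, w) \<in> Enat G \<Longrightarrow> \<exists>a b. u = to_nat a \<and> w = to_nat b \<and> edge G a b"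
  by (auto simp: Enat_def Emap_def En_def)

lemma dag: "is_dag (Vnat G) (Enat G)"
proof -
  have "finite (Vn G)"
  proof -
    have "Vn G \<subseteq> Cn ` {..<Dd G} \<union> (\<lambda>(g,p). Yn g p) ` ({..<G} \<times> {..<Nc}) \<union> (\<lambda>(g,i). Wn g i) ` ({..<G} \<times> {..<Kc})"
    proof
      fix a assume "a \<in> Vn G" then show "a \<in> Cn ` {..<Dd G} \<union> (\<lambda>(g,p). Yn g p) ` ({..<G} \<times> {..<Nc}) \<union> (\<lambda>(g,i). Wn g i) ` ({..<G} \<times> {..<Kc})"
        by (cases a) (auto simp: Vn_def)
    qed
    then show ?thesis by (rule finite_subset) auto
  qed
  moreover have "Enat G \<subseteq> Vnat G \<times> Vnat G"
    using edge_V by (auto dest!: Enat_in)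
  moreover have "acyclic (Enat G)"
    by (rule acyclic_rank[where f="\<lambda>n. rk (from_nat n)"]) (auto dest!: Enat_in rk_edge)
  ultimately show ?thesis by (simp add: is_dag_def Vnat_def)
qed

lemma sink_cases: "inVn G a \<Longrightarrow> (\<forall>b. \<not> edge G a b) \<Longrightarrow> a = Cn (Dd G - 1) \<or> a = Wn (G - 1) (Kc - 1)"
proof (cases a)
  case (Cn t)
  assume "inVn G a" "\<forall>b. \<not> edge G a b"
  then have "\<not> Suc t < Dd G" "t < Dd G" using Cn by auto
  then show ?thesis using Cn by auto
next
  case (Yn g p)
  assume h: "inVn G a" "\<forall>b. \<not> edge G a b"
  then have "\<not> Suc p < Nc" using Yn by auto
  then have "p = Pidx 0" using h Yn by (auto simp: Pi_0)
  then have "edge G a (Wn g 0)" using h Yn Kc_ge by auto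
  then show ?thesis using h by blast
next
  case (Wn g i)
  assume h: "inVn G a" "\<forall>b. \<not> edge G a b"
  then have "\<not> Suc i < Kc" using Wn by auto
  then have "Suc i = Kc" using h Wn by auto
  then have "\<not> Suc g < G" using h Wn by auto
  then show ?thesis using h Wn \<open>Suc i = Kc\<close> by auto
qed

lemma sinkC: "1 \<le> Dd G \<Longrightarrow> \<not> edge G (Cn (Dd G - 1)) b" by auto
lemma sinkW: "1 \<le> G \<Longrightarrow> \<not> edge G (Wn (G - 1) (Kc - 1)) b" using Kc_ge by auto

lemma terminal_nat:
  assumes "to_nat (Cn (Dd G - 1)) \<in> snd C \<union> (\<Union>j<k. fst C j)"
    "to_nat (Wn (G - 1) (Kc - 1)) \<in> snd C \<union> (\<Union>j<k. fst C j)"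
  shows "terminal_config (Vnat G) (Enat G) k C"
  unfolding terminal_config_def
proof (intro ballI impI)
  fix v assume v: "v \<in> Vnat G" "\<forall>w. (v, w) \<notin> Enat G"
  then obtain a where a: "v = to_nat a" "inVn G a" by (auto simp: Vnat_def Vn_def)
  have "\<forall>b. \<not> edge G a b" using v a by (metis Enat_iff)
  then show "v \<in> snd C \<union> (\<Union>j<k. fst C j)" using sink_cases[OF a(2)] a assms by auto
qed

lemma chain_reach: "(\<And>i. i < n \<Longrightarrow> (f i, f (Suc i)) \<in> E) \<Longrightarrow> j \<le> n \<Longrightarrow> (f j, f n) \<in> E\<^sup>*"
proof (induction n)
  case 0 then show ?case by simp
next
  case (Suc n)
  show ?case
  proof (cases "j = Suc n")
    case True then show ?thesis by simp
  next
    case False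
    then have "(f j, f n) \<in> E\<^sup>*" using Suc by auto
    then show ?thesis using Suc.prems(1)[of n] by (meson lessI rtrancl.rtrancl_into_rtrancl)
  qed
qed

lemma reach_any: "inVn G a \<Longrightarrow> (a, Cn (Dd G - 1)) \<in> (En G)\<^sup>* \<or> (a, Wn (G - 1) (Kc - 1)) \<in> (En G)\<^sup>*"
proof -
  assume a: "inVn G a"
  have G1: "1 \<le> G"
  proof (rule ccontr)
    assume "\<not> 1 \<le> G" then have "G = 0" by simp
    then show False using a by (cases a) (auto simp: Dd_def)
  qed
  define f where "f k = Wn (k div Kc) (k mod Kc)" for k
  have fe: "(f k, f (Suc k)) \<in> En G" if "k < G * Kc - 1" for k
  proof -
    have kk: "Suc k < G * Kc" using that by simp
    show ?thesis
    proof (cases "Suc (k mod Kc) < Kc")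
      case True
      then have "Suc k div Kc = k div Kc" "Suc k mod Kc = Suc (k mod Kc)"
        by (simp_all add: div_Suc mod_Suc)
      moreover have "k div Kc < G" using kk by (simp add: less_mult_imp_div_less)
      ultimately show ?thesis using True by (simp add: f_def En_def)
    next
      case False
      have kp: "0 < Kc" using Kc_ge by simp
      then have "Suc (k mod Kc) = Kc" using False mod_less_divisor[OF kp, of k] by simp
      then have "Suc k div Kc = Suc (k div Kc)" "Suc k mod Kc = 0"
        by (simp_all add: div_Suc mod_Suc)
      moreover have "Suc k div Kc < G" using kk by (simp add: less_mult_imp_div_less)
      ultimately show ?thesis using \<open>Suc (k mod Kc) = Kc\<close> by (simp add: f_def En_def)
    qed
  qed
  have fW: "f (g * Kc + i) = Wn g i" if "i < Kc" for g i using that by (simp add: f_def)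
  have last: "f (G * Kc - 1) = Wn (G - 1) (Kc - 1)"
  proof -
    have "G * Kc - 1 = (G - 1) * Kc + (Kc - 1)" using G1 Kc_ge by (simp add: algebra_simps diff_mult_distrib)
    then show ?thesis using fW[of "Kc - 1" "G - 1"] Kc_ge by simp
  qed
  have reachW: "(Wn g i, Wn (G - 1) (Kc - 1)) \<in> (En G)\<^sup>*" if "g < G" "i < Kc" for g i
  proof -
    have "g * Kc + i \<le> G * Kc - 1"
    proof -
      have "g * Kc + i < (g + 1) * Kc" using that by simp
      also have "\<dots> \<le> G * Kc" using that by (intro mult_le_mono1) simp
      finally show ?thesis by simp
    qed
    then have "(f (g * Kc + i), f (G * Kc - 1)) \<in> (En G)\<^sup>*" by (intro chain_reach fe)
    then show ?thesis using fW[OF that(2)] last by simp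
  qed
  show ?thesis
  proof (cases a)
    case (Cn t)
    have "(Cn t, Cn (Dd G - 1)) \<in> (En G)\<^sup>*"
      using chain_reach[of "Dd G - 1" Cn "En G" t] a Cn by (auto simp: En_def)
    then show ?thesis using Cn by simp
  next
    case (Yn g p)
    have "(Yn g p, Yn g (Nc - 1)) \<in> (En G)\<^sup>*"
      using chain_reach[of "Nc - 1" "Yn g" "En G" p] a Yn by (auto simp: En_def)
    moreover have "(Yn g (Nc - 1), Wn g 0) \<in> En G" using a Yn Kc_ge by (auto simp: En_def Pi_0)
    moreover have "(Wn g 0, Wn (G - 1) (Kc - 1)) \<in> (En G)\<^sup>*" using reachW a Yn Kc_ge by auto
    ultimately show ?thesis using Yn by (meson converse_rtrancl_into_rtrancl rtrancl_trans)
  next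
    case (Wn g i) then show ?thesis using reachW a by auto
  qed
qed

lemma reach_nat: "(a, b) \<in> (En G)\<^sup>* \<Longrightarrow> (to_nat a, to_nat b) \<in> (Enat G)\<^sup>*"
proof (induction rule: rtrancl_induct)
  case base then show ?case by simp
next
  case (step y z)
  then have "(to_nat y, to_nat z) \<in> Enat G" by (simp add: En_def)
  then show ?case using step by (meson rtrancl.rtrancl_into_rtrancl)
qed

lemma card_Vn: "card (Vn G) = Dd G + G * Nc + G * Kc"
proof -
  let ?A = "Cn ` {..<Dd G}" and ?B = "(\<lambda>(g,p). Yn g p) ` ({..<G} \<times> {..<Nc})"
    and ?C = "(\<lambda>(g,i). Wn g i) ` ({..<G} \<times> {..<Kc})"
  have eq: "Vn G = ?A \<union> ?B \<union> ?C"
  proof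
    show "Vn G \<subseteq> ?A \<union> ?B \<union> ?C"
    proof
      fix a assume "a \<in> Vn G" then show "a \<in> ?A \<union> ?B \<union> ?C" by (cases a) (auto simp: Vn_def)
    qed
  qed (auto simp: Vn_def)
  have cA: "card ?A = Dd G" by (subst card_image) (auto simp: inj_on_def)
  have cB: "card ?B = G * Nc" by (subst card_image) (auto simp: inj_on_def)
  have cC: "card ?C = G * Kc" by (subst card_image) (auto simp: inj_on_def)
  have "card (?A \<union> ?B \<union> ?C) = card (?A \<union> ?B) + card ?C" by (rule card_Un_disjoint) auto
  also have "card (?A \<union> ?B) = card ?A + card ?B" by (rule card_Un_disjoint) auto
  finally show ?thesis using eq cA cB cC by simp
qed

lemma card_Vnat: "card (Vnat G) = Dd G + G * Nc + G * Kc"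
  using card_Vn card_image[OF inj_on_subset[OF inj_to_nat', of "Vn G"]] by (simp add: Vnat_def)

lemma card_ins_le: "finite A \<Longrightarrow> card (insert x A) \<le> Suc (card A)"
  by (simp add: card_insert_if)

definition chainP :: "nat \<Rightarrow> (node \<times> node list) list" where
  "chainP G = (Cn 0, []) # map (\<lambda>t. (Cn (Suc t), [Cn t])) [0..<Dd G - 1]"

lemma chain_tok_aux:
  "n < Dd G \<Longrightarrow> 2 \<le> r \<Longrightarrow> tok (Vn G) (En G) r {} ((Cn 0, []) # map (\<lambda>t. (Cn (Suc t), [Cn t])) [0..<n]) {Cn n}"
proof (induction n)
  case 0 then show ?case by (auto simp: Vn_def En_def par_C)
next
  case (Suc n)
  have t: "tok (Vn G) (En G) r {Cn n} [(Cn (Suc n), [Cn n])] {Cn (Suc n)}"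
    using Suc.prems by (auto simp: Vn_def En_def par_C card_insert_if)
  have ih: "tok (Vn G) (En G) r {} ((Cn 0, []) # map (\<lambda>t. (Cn (Suc t), [Cn t])) [0..<n]) {Cn n}"
    using Suc by simp
  show ?case using tok_app[OF ih t] by simp
qed

lemma chain_tok: "1 \<le> Dd G \<Longrightarrow> 2 \<le> r \<Longrightarrow> tok (Vn G) (En G) r {} (chainP G) {Cn (Dd G - 1)}"
  unfolding chainP_def by (rule chain_tok_aux) auto

lemma chain_len: "1 \<le> Dd G \<Longrightarrow> length (chainP G) = Dd G"
  by (simp add: chainP_def)

definition walkP :: "nat \<Rightarrow> nat \<Rightarrow> (node \<times> node list) list" where
  "walkP g P = (Yn g 0, []) # map (\<lambda>p. (Yn g (Suc p), [Yn g p])) [0..<P]"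

lemma walk_tok:
  assumes "g < G" "finite S" "card S + 2 \<le> r" "\<And>p. Yn g p \<notin> S"
  shows "P < Nc \<Longrightarrow> tok (Vn G) (En G) r S (walkP g P) (insert (Yn g P) S)"
proof (induction P)
  case 0
  have "card (insert (Yn g 0) S) \<le> r" using assms card_ins_le[of S "Yn g 0"] by linarith
  then show ?case using assms 0 by (auto simp: walkP_def Vn_def En_def par_Y)
next
  case (Suc P)
  have c: "card (insert (Yn g (Suc P)) (insert (Yn g P) S)) \<le> r"
    using assms card_ins_le[of S "Yn g P"] card_ins_le[of "insert (Yn g P) S" "Yn g (Suc P)"] by simp
  have e: "insert (Yn g (Suc P)) (insert (Yn g P) S) - {Yn g P} = insert (Yn g (Suc P)) S"
    using assms by auto
  have "tok (Vn G) (En G) r (insert (Yn g P) S) [(Yn g (Suc P), [Yn g P])] (insert (Yn g (Suc P)) S)"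
    using assms Suc.prems c e by (auto simp: Vn_def En_def par_Y)
  moreover have "walkP g (Suc P) = walkP g P @ [(Yn g (Suc P), [Yn g P])]" by (simp add: walkP_def)
  moreover have "tok (Vn G) (En G) r S (walkP g P) (insert (Yn g P) S)" using Suc by simp
  ultimately show ?case using tok_app by metis
qed

definition prevW :: "nat \<Rightarrow> nat \<Rightarrow> node list" where
  "prevW g i = (if i = 0 then (if g = 0 then [] else [Wn (g - 1) (Kc - 1)]) else [Wn g (i - 1)])"

definition wstepP :: "nat \<Rightarrow> nat \<Rightarrow> (node \<times> node list) list" where
  "wstepP g i = walkP g (Pidx i) @ [(Wn g i, Yn g (Pidx i) # prevW g i)]"

definition gadgetP :: "nat \<Rightarrow> (node \<times> node list) list" where
  "gadgetP g = concat (map (wstepP g) [0..<Kc])"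

definition proc2P :: "nat \<Rightarrow> (node \<times> node list) list" where
  "proc2P G = concat (map gadgetP [0..<G])"

lemma prevW_props: "finite (set (prevW g i))" "card (set (prevW g i)) \<le> 1" "\<And>p. Yn g' p \<notin> set (prevW g i)"
  "distinct (prevW g i)" "Wn g i \<notin> set (prevW g i)"
  by (auto simp: prevW_def)

lemma wstep_tok:
  assumes "g < G" "i < Kc" "3 \<le> r"
  shows "tok (Vn G) (En G) r (set (prevW g i)) (wstepP g i) {Wn g i}"
proof -
  let ?S = "set (prevW g i)"
  have w: "tok (Vn G) (En G) r ?S (walkP g (Pidx i)) (insert (Yn g (Pidx i)) ?S)"
  proof (rule walk_tok)
    show "\<And>p. Yn g p \<notin> ?S" by (auto simp: prevW_def)
    show "card ?S + 2 \<le> r" using assms prevW_props(2)[of g i] by simp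
  qed (use assms Pi_lt in auto)
  have c: "card (insert (Wn g i) (insert (Yn g (Pidx i)) ?S)) \<le> r"
    using assms prevW_props[of g i] card_ins_le[of ?S "Yn g (Pidx i)"]
      card_ins_le[of "insert (Yn g (Pidx i)) ?S" "Wn g i"] by simp
  have par: "\<forall>u. (u, Wn g i) \<in> En G \<longrightarrow> u \<in> insert (Yn g (Pidx i)) ?S"
    by (auto simp: En_def par_W prevW_def)
  have e: "insert (Wn g i) (insert (Yn g (Pidx i)) ?S) - set (Yn g (Pidx i) # prevW g i) = {Wn g i}"
    using prevW_props[of g i] by auto
  have "tok (Vn G) (En G) r (insert (Yn g (Pidx i)) ?S) [(Wn g i, Yn g (Pidx i) # prevW g i)] {Wn g i}"
  proof -
    have ny: "Yn g (Pidx i) \<notin> ?S" by (auto simp: prevW_def)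
    show ?thesis using assms c par e prevW_props[of g i] ny by (auto simp: Vn_def)
  qed
  then show ?thesis using w tok_app unfolding wstepP_def by blast
qed

lemma gadget_tok_aux:
  assumes "g < G" "3 \<le> r"
  shows "n < Kc \<Longrightarrow> tok (Vn G) (En G) r (set (prevW g 0)) (concat (map (wstepP g) [0..<Suc n])) {Wn g n}"
proof (induction n)
  case 0 then show ?case using wstep_tok[OF assms(1) _ assms(2), of 0] by simp
next
  case (Suc n)
  have "tok (Vn G) (En G) r (set (prevW g (Suc n))) (wstepP g (Suc n)) {Wn g (Suc n)}"
    using wstep_tok[OF assms(1) Suc.prems assms(2)] .
  moreover have "set (prevW g (Suc n)) = {Wn g n}" by (simp add: prevW_def)
  ultimately have t: "tok (Vn G) (En G) r {Wn g n} (wstepP g (Suc n)) {Wn g (Suc n)}" by simp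
  have ih: "tok (Vn G) (En G) r (set (prevW g 0)) (concat (map (wstepP g) [0..<Suc n])) {Wn g n}"
    using Suc by simp
  have eq: "concat (map (wstepP g) [0..<Suc (Suc n)]) = concat (map (wstepP g) [0..<Suc n]) @ wstepP g (Suc n)"
    by simp
  show ?case by (subst eq) (rule tok_app[OF ih t])
qed

lemma gadget_tok: "g < G \<Longrightarrow> 3 \<le> r \<Longrightarrow> tok (Vn G) (En G) r (set (prevW g 0)) (gadgetP g) {Wn g (Kc - 1)}"
  using gadget_tok_aux[of g G r "Kc - 1"] Kc_ge by (simp add: gadgetP_def)

lemma proc2_tok_aux:
  assumes "3 \<le> r"
  shows "n < G \<Longrightarrow> tok (Vn G) (En G) r {} (concat (map gadgetP [0..<Suc n])) {Wn n (Kc - 1)}"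
proof (induction n)
  case 0 then show ?case using gadget_tok[of 0 G r] assms by (simp add: prevW_def)
next
  case (Suc n)
  have "tok (Vn G) (En G) r (set (prevW (Suc n) 0)) (gadgetP (Suc n)) {Wn (Suc n) (Kc - 1)}"
    using gadget_tok[OF Suc.prems assms] .
  moreover have "set (prevW (Suc n) 0) = {Wn n (Kc - 1)}" by (simp add: prevW_def)
  ultimately have t: "tok (Vn G) (En G) r {Wn n (Kc - 1)} (gadgetP (Suc n)) {Wn (Suc n) (Kc - 1)}" by simp
  have ih: "tok (Vn G) (En G) r {} (concat (map gadgetP [0..<Suc n])) {Wn n (Kc - 1)}"
    using Suc by simp
  have eq: "concat (map gadgetP [0..<Suc (Suc n)]) = concat (map gadgetP [0..<Suc n]) @ gadgetP (Suc n)"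
    by simp
  show ?case by (subst eq) (rule tok_app[OF ih t])
qed

lemma proc2_tok: "1 \<le> G \<Longrightarrow> 3 \<le> r \<Longrightarrow> tok (Vn G) (En G) r {} (proc2P G) {Wn (G - 1) (Kc - 1)}"
  using proc2_tok_aux[of r "G - 1" G] by (simp add: proc2P_def)

lemma len_wstep: "i < Kc \<Longrightarrow> length (wstepP g i) = (Kc - i) * Lc + 1"
proof -
  assume "i < Kc"
  then have "1 \<le> (Kc - i) * Lc" using Lc_ge by simp
  then have "Suc ((Kc - i) * Lc - 1) = (Kc - i) * Lc" by arith
  then show ?thesis by (simp add: wstepP_def walkP_def Pidx_def)
qed

lemma len_gadget: "length (gadgetP g) = T2"
proof -
  have "length (gadgetP g) = (\<Sum>i\<leftarrow>[0..<Kc]. length (wstepP g i))"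
    by (simp add: gadgetP_def length_concat o_def)
  also have "\<dots> = (\<Sum>i\<in>{..<Kc}. length (wstepP g i))"
    by (simp add: sum_set_upt_conv_sum_list_nat[symmetric] atLeast0LessThan)
  also have "\<dots> = T2" unfolding T2_def by (rule sum.cong) (auto simp: len_wstep)
  finally show ?thesis .
qed

lemma len_proc2: "length (proc2P G) = Dd G"
  by (simp add: proc2P_def length_concat o_def len_gadget sum_list_triv Dd_def)

definition mapT :: "('a \<Rightarrow> 'b) \<Rightarrow> ('a \<times> 'a list) list \<Rightarrow> ('b \<times> 'b list) list" where
  "mapT f p = map (\<lambda>(a,ds). (f a, map f ds)) p"

lemma zip_count: "length p = length q \<Longrightarrow>
  length (filter is_comp (zipm p q)) = length p \<and> num_io (zipm p q) = 0"
proof (induction p q rule: list_induct2)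
  case Nil then show ?case by (simp add: zipm_def num_io_def)
next
  case (Cons x p y q)
  obtain a ds where x: "x = (a,ds)" by fastforce
  obtain b es where y: "y = (b,es)" by fastforce
  have f1: "filter is_comp (map (DelRed j) l) = []" for j l by (induction l) auto
  have f2: "filter is_io (map (DelRed j) l) = []" for j l by (induction l) auto
  show ?case using Cons x y f1 f2 by (simp add: zipm_def num_io_def)
qed

definition ms2 :: "nat \<Rightarrow> nat move list" where
  "ms2 G = zipm (mapT to_nat (chainP G)) (mapT to_nat (proc2P G))"

lemma UN2: "(\<Union>j<(2::nat). f j) = f 0 \<union> f 1"
proof -
  have "{..<(2::nat)} = {0, 1}" by auto
  then show ?thesis by simp
qed

lemma F2_empty: "F2 {} {} = (\<lambda>_. {})" by (auto simp: F2_def fun_eq_iff)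

lemma strat2:
  assumes G: "1 \<le> G" and r: "3 \<le> r"
  shows "pebbling_strategy (Vnat G) (Enat G) 2 r (ms2 G) \<and> strategy_cost g (ms2 G) = Dd G \<and> num_io (ms2 G) = 0"
proof -
  have D: "1 \<le> Dd G" using Dd_ge[OF G] .
  have t1: "tok (Vnat G) (Enat G) r {} (mapT to_nat (chainP G)) {to_nat (Cn (Dd G - 1))}"
    using tok_map[OF inj_to_nat' chain_tok[OF D, of r]] r by (simp add: Vnat_def Enat_def mapT_def)
  have t2: "tok (Vnat G) (Enat G) r {} (mapT to_nat (proc2P G)) {to_nat (Wn (G - 1) (Kc - 1))}"
    using tok_map[OF inj_to_nat' proc2_tok[OF G r]] by (simp add: Vnat_def Enat_def mapT_def)
  have len: "length (mapT to_nat (chainP G)) = length (mapT to_nat (proc2P G))"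
    using chain_len[OF D] len_proc2 by (simp add: mapT_def)
  have ru: "runs (Vnat G) (Enat G) 2 r (F2 {} {}, {}) (ms2 G)
      (F2 {to_nat (Cn (Dd G - 1))} {to_nat (Wn (G - 1) (Kc - 1))}, {})"
    unfolding ms2_def by (rule zip_runs[OF len t1 t2]) auto
  have tm: "terminal_config (Vnat G) (Enat G) 2 (F2 {to_nat (Cn (Dd G - 1))} {to_nat (Wn (G - 1) (Kc - 1))}, {})"
  proof -
    have e: "(\<Union>j<(2::nat). F2 {to_nat (Cn (Dd G - 1))} {to_nat (Wn (G - 1) (Kc - 1))} j)
       = {to_nat (Cn (Dd G - 1))} \<union> {to_nat (Wn (G - 1) (Kc - 1))}" by (simp only: UN2 F2_0 F2_1)
    show ?thesis by (rule terminal_nat) (simp_all only: e snd_conv fst_conv, blast+)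
  qed
  have ps: "pebbling_strategy (Vnat G) (Enat G) 2 r (ms2 G)"
    unfolding pebbling_strategy_def init_config_def F2_empty[symmetric]
    by (rule runs_strat[OF ru tm])
  have zc: "length (filter is_comp (ms2 G)) = Dd G" "num_io (ms2 G) = 0"
    using zip_count[OF len] chain_len[OF D] by (simp_all add: ms2_def mapT_def)
  show ?thesis using ps zc cost_formula[of g "ms2 G"] by simp
qed

lemma depth_G:
  assumes G: "1 \<le> G" and s: "pebbling_strategy (Vnat G) (Enat G) k r ms"
  shows "Dd G \<le> strategy_cost g ms"
proof -
  have D: "1 \<le> Dd G" using Dd_ge[OF G] .
  have "Suc (Dd G - 1) \<le> strategy_cost g ms"
  proof (rule depth_bound[OF s, where c="\<lambda>i. to_nat (Cn i)"])
    show "(to_nat (Cn i), to_nat (Cn (Suc i))) \<in> Enat G" if "Suc i \<le> Dd G - 1" for i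
      using that D by simp
    show "to_nat (Cn (Dd G - 1)) \<in> Vnat G" using D by simp
    show "(to_nat (Cn (Dd G - 1)), w) \<notin> Enat G" for w
      using sinkC[OF D] by (auto dest!: Enat_in simp: inj_eq[OF inj_to_nat'])
  qed
  then show ?thesis using D by simp
qed

lemma OPT_IO_zero:
  assumes s0: "pebbling_strategy V E k r ms0" and io: "num_io ms0 = 0"
    and opt: "\<And>ms. pebbling_strategy V E k r ms \<Longrightarrow> strategy_cost g ms0 \<le> strategy_cost g ms"
  shows "OPT_IO V E k r g = 0"
proof -
  have "OPT V E k r g = strategy_cost g ms0"
    unfolding OPT_def by (rule Least_equality) (use s0 opt in auto)
  then have "\<exists>ms. pebbling_strategy V E k r ms \<and> strategy_cost g ms = OPT V E k r g \<and> num_io ms = 0"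
    using s0 io by auto
  then show ?thesis unfolding OPT_IO_def by (simp add: Least_eq_0)
qed

lemma two_proc:
  assumes G: "1 \<le> G" and r: "3 \<le> r"
  shows "pebblable (Vnat G) (Enat G) 2 r \<and> OPT_IO (Vnat G) (Enat G) 2 r g = 0"
proof -
  have s: "pebbling_strategy (Vnat G) (Enat G) 2 r (ms2 G)" "strategy_cost g (ms2 G) = Dd G" "num_io (ms2 G) = 0"
    using strat2[OF G r] by auto
  show ?thesis
    using OPT_IO_zero[OF s(1) s(3)] depth_G[OF G] s(2) s(1) unfolding pebblable_def by auto
qed

definition adv :: "nat \<Rightarrow> nat \<Rightarrow> nat \<Rightarrow> node step list" where
  "adv g a n = concat (map (\<lambda>p. [SC (Yn g (Suc p)), SD (Yn g p)]) [a..<a+n])"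

lemma adv_sok:
  assumes "g < G" "finite S" "card S + 2 \<le> r" "\<And>p. Yn g p \<notin> S"
  shows "a + n < Nc \<Longrightarrow> sok (Vn G) (En G) r (insert (Yn g a) S) B (adv g a n) (insert (Yn g (a+n)) S) B"
proof (induction n)
  case 0 then show ?case by (simp add: adv_def)
next
  case (Suc n)
  have c: "card (insert (Yn g (Suc (a+n))) (insert (Yn g (a+n)) S)) \<le> r"
    using assms card_ins_le[of S "Yn g (a+n)"] card_ins_le[of "insert (Yn g (a+n)) S" "Yn g (Suc (a+n))"] by simp
  have e: "insert (Yn g (Suc (a+n))) (insert (Yn g (a+n)) S) - {Yn g (a+n)} = insert (Yn g (Suc (a+n))) S"
    using assms by auto
  have st: "sok (Vn G) (En G) r (insert (Yn g (a+n)) S) B [SC (Yn g (Suc (a+n))), SD (Yn g (a+n))] (insert (Yn g (a + Suc n)) S) B"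
    using assms Suc.prems c e by (auto simp: Vn_def En_def par_Y)
  have ih: "sok (Vn G) (En G) r (insert (Yn g a) S) B (adv g a n) (insert (Yn g (a+n)) S) B"
    using Suc by simp
  have eq: "adv g a (Suc n) = adv g a n @ [SC (Yn g (Suc (a+n))), SD (Yn g (a+n))]" by (simp add: adv_def)
  show ?case by (subst eq) (rule sok_app[OF ih st])
qed

definition blk :: "nat \<Rightarrow> nat \<Rightarrow> node step list" where
  "blk g j = SS (Yn g (j * Lc - 1)) # adv g (j * Lc - 1) Lc"

definition walk1 :: "nat \<Rightarrow> node step list" where
  "walk1 g = SC (Yn g 0) # adv g 0 (Lc - 1) @ concat (map (blk g) [1..<Kc])"

definition Xg :: "nat \<Rightarrow> node set" where
  "Xg g = (\<lambda>j. Yn g (j * Lc - 1)) ` {1..<Kc}"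

lemma walk1_aux:
  assumes "g < G" "finite S" "card S + 2 \<le> r" "\<And>p. Yn g p \<notin> S"
  shows "Suc J \<le> Kc \<Longrightarrow> sok (Vn G) (En G) r S B (SC (Yn g 0) # adv g 0 (Lc - 1) @ concat (map (blk g) [1..<Suc J]))
     (insert (Yn g (Suc J * Lc - 1)) S) (B \<union> (\<lambda>j. Yn g (j * Lc - 1)) ` {1..<Suc J})"
proof (induction J)
  case 0
  have n: "0 + (Lc - 1) < Nc"
  proof -
    have "1 * Lc \<le> Kc * Lc" using Kc_ge by (intro mult_le_mono1) simp
    then have "Lc - 1 < Kc * Lc" using Lc_ge by arith
    then show ?thesis by (simp add: Nc_def)
  qed
  have a: "sok (Vn G) (En G) r (insert (Yn g 0) S) B (adv g 0 (Lc - 1)) (insert (Yn g (0 + (Lc - 1))) S) B"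
    by (rule adv_sok[OF assms n])
  have c: "card (insert (Yn g 0) S) \<le> r" using assms card_ins_le[of S "Yn g 0"] by simp
  have "0 < Nc" using n by simp
  then show ?case using a c assms by (simp add: Vn_def En_def par_Y)
next
  case (Suc J)
  have ih: "sok (Vn G) (En G) r S B (SC (Yn g 0) # adv g 0 (Lc - 1) @ concat (map (blk g) [1..<Suc J]))
     (insert (Yn g (Suc J * Lc - 1)) S) (B \<union> (\<lambda>j. Yn g (j * Lc - 1)) ` {1..<Suc J})"
    using Suc by simp
  have p1: "1 \<le> Suc J * Lc" using Lc_ge by simp
  have ar: "Suc J * Lc - 1 + Lc = Suc (Suc J) * Lc - 1" using p1 by simp
  have lt: "Suc (Suc J) * Lc - 1 < Nc"
  proof -
    have "Suc (Suc J) * Lc \<le> Kc * Lc" using Suc.prems by (intro mult_le_mono1)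
    then show ?thesis using p1 by (simp add: Nc_def)
  qed
  have a: "sok (Vn G) (En G) r (insert (Yn g (Suc J * Lc - 1)) S) B' (adv g (Suc J * Lc - 1) Lc)
       (insert (Yn g (Suc J * Lc - 1 + Lc)) S) B'" for B'
    by (rule adv_sok[OF assms]) (use ar lt in simp)
  have bl: "sok (Vn G) (En G) r (insert (Yn g (Suc J * Lc - 1)) S) (B \<union> (\<lambda>j. Yn g (j * Lc - 1)) ` {1..<Suc J})
       (blk g (Suc J)) (insert (Yn g (Suc (Suc J) * Lc - 1)) S) (B \<union> (\<lambda>j. Yn g (j * Lc - 1)) ` {1..<Suc (Suc J)})"
  proof -
    have e: "insert (Yn g (Suc J * Lc - 1)) (B \<union> (\<lambda>j. Yn g (j * Lc - 1)) ` {1..<Suc J})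
       = B \<union> (\<lambda>j. Yn g (j * Lc - 1)) ` {1..<Suc (Suc J)}"
      by (auto simp: atLeastLessThanSuc)
    show ?thesis using a[of "B \<union> (\<lambda>j. Yn g (j * Lc - 1)) ` {1..<Suc (Suc J)}"] ar e by (simp add: blk_def)
  qed
  have eq: "SC (Yn g 0) # adv g 0 (Lc - 1) @ concat (map (blk g) [1..<Suc (Suc J)])
     = (SC (Yn g 0) # adv g 0 (Lc - 1) @ concat (map (blk g) [1..<Suc J])) @ blk g (Suc J)" by simp
  show ?case by (subst eq) (rule sok_app[OF ih bl])
qed

lemma walk1_sok:
  assumes "g < G" "finite S" "card S + 2 \<le> r" "\<And>p. Yn g p \<notin> S"
  shows "sok (Vn G) (En G) r S B (walk1 g) (insert (Yn g (Nc - 1)) S) (B \<union> Xg g)"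
  using walk1_aux[OF assms, of "Kc - 1" B] Kc_ge by (simp add: walk1_def Xg_def Nc_def)

definition lp :: "nat \<Rightarrow> nat \<Rightarrow> node step list" where
  "lp g i = [SL (Yn g (Pidx i)), SC (Wn g i), SD (Yn g (Pidx i)), SD (Wn g (i - 1))]"

definition wph :: "nat \<Rightarrow> node step list" where
  "wph g = [SC (Wn g 0), SD (Yn g (Nc - 1))] @ map SD (prevW g 0) @ concat (map (lp g) [1..<Kc])"

lemma Pi_X: "1 \<le> i \<Longrightarrow> i < Kc \<Longrightarrow> Yn g (Pidx i) \<in> Xg g"
  unfolding Xg_def Pidx_def by (rule image_eqI[of _ _ "Kc - i"]) auto

lemma lp_aux:
  assumes "g < G" "4 \<le> r" "Xg g \<subseteq> B"
  shows "Suc n \<le> Kc \<Longrightarrow> sok (Vn G) (En G) r {Cn t, Wn g 0} B (concat (map (lp g) [1..<Suc n])) {Cn t, Wn g n} B"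
proof (induction n)
  case 0 then show ?case by simp
next
  case (Suc n)
  have ih: "sok (Vn G) (En G) r {Cn t, Wn g 0} B (concat (map (lp g) [1..<Suc n])) {Cn t, Wn g n} B"
    using Suc by simp
  have inB: "Yn g (Pidx (Suc n)) \<in> B" using Pi_X[of "Suc n" g] Suc.prems assms by auto
  have c1: "card (insert (Yn g (Pidx (Suc n))) {Cn t, Wn g n}) \<le> r" using assms card_insert_le_m1
    by (simp add: card_insert_if)
  have c2: "card (insert (Wn g (Suc n)) (insert (Yn g (Pidx (Suc n))) {Cn t, Wn g n})) \<le> r" using assms
    by (simp add: card_insert_if)
  have par: "\<forall>u. (u, Wn g (Suc n)) \<in> En G \<longrightarrow> u \<in> insert (Yn g (Pidx (Suc n))) {Cn t, Wn g n}"
    by (auto simp: En_def par_W)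
  have e: "insert (Wn g (Suc n)) (insert (Yn g (Pidx (Suc n))) {Cn t, Wn g n}) - {Yn g (Pidx (Suc n))} - {Wn g n}
     = {Cn t, Wn g (Suc n)}" by auto
  have st: "sok (Vn G) (En G) r {Cn t, Wn g n} B (lp g (Suc n)) {Cn t, Wn g (Suc n)} B"
    using inB c1 c2 par e assms Suc.prems by (simp add: lp_def Vn_def)
  have eq: "concat (map (lp g) [1..<Suc (Suc n)]) = concat (map (lp g) [1..<Suc n]) @ lp g (Suc n)" by simp
  show ?case by (subst eq) (rule sok_app[OF ih st])
qed

lemma wph_sok:
  assumes "g < G" "4 \<le> r" "Xg g \<subseteq> B"
  shows "sok (Vn G) (En G) r (insert (Yn g (Nc - 1)) (insert (Cn t) (set (prevW g 0)))) B (wph g) {Cn t, Wn g (Kc - 1)} B"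
proof -
  let ?R0 = "insert (Yn g (Nc - 1)) (insert (Cn t) (set (prevW g 0)))"
  have c: "card (insert (Wn g 0) ?R0) \<le> r" using assms by (simp add: card_insert_if prevW_def)
  have par: "\<forall>u. (u, Wn g 0) \<in> En G \<longrightarrow> u \<in> ?R0" by (auto simp: En_def par_W Pi_0 prevW_def)
  have s1: "sok (Vn G) (En G) r ?R0 B [SC (Wn g 0), SD (Yn g (Nc - 1))] (insert (Wn g 0) ?R0 - {Yn g (Nc - 1)}) B"
    using c par assms Kc_ge by (simp add: Vn_def)
  have s2: "sok (Vn G) (En G) r (insert (Wn g 0) ?R0 - {Yn g (Nc - 1)}) B (map SD (prevW g 0)) {Cn t, Wn g 0} B"
  proof -
    have "sok (Vn G) (En G) r (insert (Wn g 0) ?R0 - {Yn g (Nc - 1)}) B (map SD (prevW g 0))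
        (insert (Wn g 0) ?R0 - {Yn g (Nc - 1)} - set (prevW g 0)) B"
      by (rule sdels) (auto simp: prevW_def)
    moreover have "insert (Wn g 0) ?R0 - {Yn g (Nc - 1)} - set (prevW g 0) = {Cn t, Wn g 0}"
      by (auto simp: prevW_def)
    ultimately show ?thesis by simp
  qed
  have s3: "sok (Vn G) (En G) r {Cn t, Wn g 0} B (concat (map (lp g) [1..<Kc])) {Cn t, Wn g (Kc - 1)} B"
    using lp_aux[OF assms, of "Kc - 1" t] Kc_ge by simp
  show ?thesis unfolding wph_def by (rule sok_app[OF s1 sok_app[OF s2 s3]])
qed

definition gad1 :: "nat \<Rightarrow> node step list" where "gad1 g = walk1 g @ wph g"

lemma gad1_sok:
  assumes "g < G" "4 \<le> r"
  shows "sok (Vn G) (En G) r (insert (Cn t) (set (prevW g 0))) B (gad1 g) {Cn t, Wn g (Kc - 1)} (B \<union> Xg g)"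
proof -
  have w: "sok (Vn G) (En G) r (insert (Cn t) (set (prevW g 0))) B (walk1 g)
     (insert (Yn g (Nc - 1)) (insert (Cn t) (set (prevW g 0)))) (B \<union> Xg g)"
    by (rule walk1_sok) (use assms in \<open>auto simp: prevW_def card_insert_if\<close>)
  have p: "sok (Vn G) (En G) r (insert (Yn g (Nc - 1)) (insert (Cn t) (set (prevW g 0)))) (B \<union> Xg g) (wph g)
     {Cn t, Wn g (Kc - 1)} (B \<union> Xg g)"
    by (rule wph_sok) (use assms in auto)
  show ?thesis unfolding gad1_def by (rule sok_app[OF w p])
qed

definition steps1 :: "nat \<Rightarrow> node step list" where
  "steps1 G = concat (map t2s (chainP G)) @ concat (map gad1 [0..<G])"

lemma gads_aux:
  assumes "4 \<le> r"
  shows "n < G \<Longrightarrow> sok (Vn G) (En G) r {Cn t} {} (concat (map gad1 [0..<Suc n])) {Cn t, Wn n (Kc - 1)} (\<Union>g<Suc n. Xg g)"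
proof (induction n)
  case 0 then show ?case using gad1_sok[of 0 G r t "{}"] assms by (simp add: prevW_def lessThan_Suc)
next
  case (Suc n)
  have ih: "sok (Vn G) (En G) r {Cn t} {} (concat (map gad1 [0..<Suc n])) {Cn t, Wn n (Kc - 1)} (\<Union>g<Suc n. Xg g)"
    using Suc by simp
  have st: "sok (Vn G) (En G) r {Cn t, Wn n (Kc - 1)} (\<Union>g<Suc n. Xg g) (gad1 (Suc n)) {Cn t, Wn (Suc n) (Kc - 1)}
     (\<Union>g<Suc (Suc n). Xg g)"
  proof -
    have "sok (Vn G) (En G) r (insert (Cn t) (set (prevW (Suc n) 0))) (\<Union>g<Suc n. Xg g) (gad1 (Suc n))
      {Cn t, Wn (Suc n) (Kc - 1)} ((\<Union>g<Suc n. Xg g) \<union> Xg (Suc n))"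
      by (rule gad1_sok) (use Suc.prems assms in auto)
    moreover have "(\<Union>g<Suc n. Xg g) \<union> Xg (Suc n) = (\<Union>g<Suc (Suc n). Xg g)" by (auto simp: lessThan_Suc)
    ultimately show ?thesis by (simp add: prevW_def)
  qed
  have eq: "concat (map gad1 [0..<Suc (Suc n)]) = concat (map gad1 [0..<Suc n]) @ gad1 (Suc n)" by simp
  show ?case by (subst eq) (rule sok_app[OF ih st])
qed

lemma steps1_sok:
  assumes "1 \<le> G" "4 \<le> r"
  shows "sok (Vn G) (En G) r {} {} (steps1 G) {Cn (Dd G - 1), Wn (G - 1) (Kc - 1)} (\<Union>g<G. Xg g)"
proof -
  have c: "sok (Vn G) (En G) r {} {} (concat (map t2s (chainP G))) {Cn (Dd G - 1)} {}"
    by (rule tok_sok) (rule chain_tok, use assms Dd_ge in auto)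
  have g: "sok (Vn G) (En G) r {Cn (Dd G - 1)} {} (concat (map gad1 [0..<G])) {Cn (Dd G - 1), Wn (G - 1) (Kc - 1)} (\<Union>g<G. Xg g)"
    using gads_aux[OF assms(2), of "G - 1" G "Dd G - 1"] assms by simp
  show ?thesis unfolding steps1_def by (rule sok_app[OF c g])
qed

fun isC :: "'a step \<Rightarrow> bool" where "isC (SC _) = True" | "isC _ = False"
fun isIOs :: "'a step \<Rightarrow> bool" where "isIOs (SS _) = True" | "isIOs (SL _) = True" | "isIOs _ = False"

lemma cnt_map: "length (filter is_comp (map mv1 (map (smap f) s))) = length (filter isC s) \<and>
   num_io (map mv1 (map (smap f) s)) = length (filter isIOs s)"
proof (induction s)
  case Nil then show ?case by (simp add: num_io_def)
next
  case (Cons st s) then show ?case by (cases st) (auto simp: num_io_def)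
qed

lemma cnt_concat: "length (filter P (concat (map h xs))) = (\<Sum>x\<leftarrow>xs. length (filter P (h x)))"
  by (simp add: filter_concat length_concat o_def)

lemma cnt_const: "(\<And>x. x \<in> set xs \<Longrightarrow> h x = c) \<Longrightarrow> (\<Sum>x\<leftarrow>xs. h x) = length xs * (c::nat)"
proof (induction xs)
  case Nil then show ?case by simp
next
  case (Cons a xs) then show ?case by simp
qed

lemma t2s_cnt: "length (filter isC (concat (map t2s p))) = length p" "length (filter isIOs (concat (map t2s p))) = 0"
proof -
  have a: "length (filter isC (t2s x)) = 1" "length (filter isIOs (t2s x)) = 0" for x :: "'a \<times> 'a list"
  proof -
    obtain a ds where "x = (a, ds)" by fastforce
    moreover have "filter isC (map SD ds) = []" "filter isIOs (map SD ds) = []" for ds :: "'a list"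
      by (induction ds) auto
    ultimately show "length (filter isC (t2s x)) = 1" "length (filter isIOs (t2s x)) = 0" by auto
  qed
  show "length (filter isC (concat (map t2s p))) = length p"
    by (simp add: cnt_concat a cnt_const[where c=1])
  show "length (filter isIOs (concat (map t2s p))) = 0"
    by (simp add: cnt_concat a cnt_const[where c=0])
qed

lemma adv_cnt: "length (filter isC (adv g a n)) = n" "length (filter isIOs (adv g a n)) = 0"
  by (simp_all only: adv_def cnt_concat, (subst cnt_const[where c=1], simp, simp)+)
     (subst cnt_const[where c=0], simp, simp)

lemma walk1_cnt: "length (filter isC (walk1 g)) = Nc" "length (filter isIOs (walk1 g)) = Kc - 1"
proof -
  have b: "length (filter isC (blk g j)) = Lc" "length (filter isIOs (blk g j)) = 1" for j
    using adv_cnt by (simp_all add: blk_def)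
  have "length (filter isC (walk1 g)) = 1 + (Lc - 1) + (Kc - 1) * Lc"
    by (simp add: walk1_def adv_cnt cnt_concat cnt_const[where c=Lc] b)
  also have "\<dots> = Nc" using Lc_ge Kc_ge by (simp add: Nc_def algebra_simps diff_mult_distrib)
  finally show "length (filter isC (walk1 g)) = Nc" .
  show "length (filter isIOs (walk1 g)) = Kc - 1"
    by (simp add: walk1_def adv_cnt cnt_concat cnt_const[where c=1] b)
qed

lemma wph_cnt: "length (filter isC (wph g)) = Kc" "length (filter isIOs (wph g)) = Kc - 1"
proof -
  have l: "length (filter isC (lp g i)) = 1" "length (filter isIOs (lp g i)) = 1" for i
    by (simp_all add: lp_def)
  have d: "filter isC (map SD l) = []" "filter isIOs (map SD l) = []" for l :: "node list"
    by (induction l) auto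
  show "length (filter isC (wph g)) = Kc" using Kc_ge
    by (simp add: wph_def cnt_concat cnt_const[where c=1] l d)
  show "length (filter isIOs (wph g)) = Kc - 1"
    by (simp add: wph_def cnt_concat cnt_const[where c=1] l d)
qed

lemma steps1_cnt: "1 \<le> G \<Longrightarrow> length (filter isC (steps1 G)) = Dd G + G * (Nc + Kc)"
  "length (filter isIOs (steps1 G)) = G * (2 * (Kc - 1))"
proof -
  have g: "length (filter isC (gad1 g)) = Nc + Kc" "length (filter isIOs (gad1 g)) = 2 * (Kc - 1)" for g
    using walk1_cnt wph_cnt by (simp_all add: gad1_def)
  have c1: "length (filter isC (concat (map gad1 [0..<G]))) = G * (Nc + Kc)"
    by (simp add: cnt_concat cnt_const[where c="Nc + Kc"] g)
  have c2: "length (filter isIOs (concat (map gad1 [0..<G]))) = G * (2 * (Kc - 1))"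
    by (simp add: cnt_concat cnt_const[where c="2 * (Kc - 1)"] g)
  show "1 \<le> G \<Longrightarrow> length (filter isC (steps1 G)) = Dd G + G * (Nc + Kc)"
    using Dd_ge t2s_cnt(1)[of "chainP G"] chain_len c1 unfolding steps1_def by simp
  show "length (filter isIOs (steps1 G)) = G * (2 * (Kc - 1))"
    using t2s_cnt(2)[of "chainP G"] c2 unfolding steps1_def by simp
qed

definition ms1 :: "nat \<Rightarrow> nat move list" where
  "ms1 G = map mv1 (map (smap to_nat) (steps1 G))"

lemma F1_empty: "F1 {} = (\<lambda>_. {})" by (auto simp: F1_def fun_eq_iff)

lemma strat1:
  assumes G: "1 \<le> G" and r: "4 \<le> r"
  shows "pebbling_strategy (Vnat G) (Enat G) 1 r (ms1 G) \<and>
    length (filter is_comp (ms1 G)) = card (Vnat G) \<and> num_io (ms1 G) = G * (2 * (Kc - 1))"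
proof -
  let ?R = "{to_nat (Cn (Dd G - 1)), to_nat (Wn (G - 1) (Kc - 1))}"
  have s: "sok (Vnat G) (Enat G) r {} {} (map (smap to_nat) (steps1 G)) ?R (to_nat ` (\<Union>g<G. Xg g))"
    using sok_map[OF inj_to_nat' steps1_sok[OF G r]] by (simp add: Vnat_def Enat_def)
  have ru: "runs (Vnat G) (Enat G) 1 r (F1 {}, {}) (ms1 G) (F1 ?R, to_nat ` (\<Union>g<G. Xg g))"
    unfolding ms1_def by (rule sok_runs[OF s]) simp
  have e: "(\<Union>j<(1::nat). F1 ?R j) = ?R"
  proof -
    have "{..<(1::nat)} = {0}" by auto
    then show ?thesis by (simp add: F1_def)
  qed
  have tm: "terminal_config (Vnat G) (Enat G) 1 (F1 ?R, to_nat ` (\<Union>g<G. Xg g))"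
    by (rule terminal_nat) (simp_all only: e snd_conv fst_conv, blast+)
  have ps: "pebbling_strategy (Vnat G) (Enat G) 1 r (ms1 G)"
    unfolding pebbling_strategy_def init_config_def F1_empty[symmetric]
    by (rule runs_strat[OF ru tm])
  show ?thesis using ps cnt_map[of to_nat "steps1 G"] steps1_cnt(1)[OF G] steps1_cnt(2)[of G] card_Vnat[of G]
    by (simp add: ms1_def algebra_simps)
qed

lemma sinkW_nat: "1 \<le> G \<Longrightarrow> (to_nat (Wn (G - 1) (Kc - 1)), w) \<notin> Enat G"
  using sinkW by (auto dest!: Enat_in simp: inj_eq[OF inj_to_nat'])
lemma sinkC_nat: "1 \<le> G \<Longrightarrow> (to_nat (Cn (Dd G - 1)), w) \<notin> Enat G"
  using sinkC Dd_ge by (auto dest!: Enat_in simp: inj_eq[OF inj_to_nat'])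

lemma seg_div: "1 \<le> j \<Longrightarrow> (j - 1) * Lc \<le> p \<Longrightarrow> p < j * Lc \<Longrightarrow> p div Lc + 1 = j"
proof -
  assume a: "1 \<le> j" "(j - 1) * Lc \<le> p" "p < j * Lc"
  have "p div Lc = j - 1"
    by (rule div_nat_eqI) (use a in \<open>auto simp: mult.commute\<close>)
  then show ?thesis using a by simp
qed

context
  fixes G r ms
  assumes strat: "pebbling_strategy (Vnat G) (Enat G) 1 r ms"
    and G1: "1 \<le> G" and rK: "r \<le> Kc - 1"
begin

lemma all_comp: "inVn G a \<Longrightarrow> \<exists>u. comp_at ms u (to_nat a)"
proof -
  assume a: "inVn G a"
  from reach_any[OF a] show ?thesis
  proof
    assume "(a, Cn (Dd G - 1)) \<in> (En G)\<^sup>*"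
    then show ?thesis
      using all_computed[OF strat _ sinkC_nat[OF G1] reach_nat] Dd_ge[OF G1] by simp
  next
    assume "(a, Wn (G - 1) (Kc - 1)) \<in> (En G)\<^sup>*"
    then show ?thesis
      using all_computed[OF strat _ sinkW_nat[OF G1] reach_nat] G1 Kc_ge by simp
  qed
qed

lemma comp_lt: "comp_at ms u v \<Longrightarrow> u < length ms" by (simp add: comp_at_def)

lemma two_comps: "comp_at ms u v \<Longrightarrow> comp_at ms u' v \<Longrightarrow> u \<noteq> u' \<Longrightarrow> 2 \<le> card {u. comp_at ms u v}"
proof -
  assume a: "comp_at ms u v" "comp_at ms u' v" "u \<noteq> u'"
  have "finite {u. comp_at ms u v}" by (rule finite_subset[of _ "{..<length ms}"]) (auto simp: comp_at_def)
  moreover have "{u, u'} \<subseteq> {u. comp_at ms u v}" using a by auto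
  ultimately have "card {u, u'} \<le> card {u. comp_at ms u v}" by (rule card_mono)
  then show ?thesis using a by simp
qed

lemma gadget_extra:
  assumes g: "g < G" and nl: "\<And>u p. p < Nc \<Longrightarrow> \<not> load_at ms u (to_nat (Yn g p))"
  shows "\<exists>j. 1 \<le> j \<and> j < Kc \<and> (\<forall>p. (j - 1) * Lc \<le> p \<and> p < j * Lc \<longrightarrow> 2 \<le> card {u. comp_at ms u (to_nat (Yn g p))})"
proof -
  let ?y = "\<lambda>p. to_nat (Yn g p)" and ?w = "\<lambda>i. to_nat (Wn g i)"
  have Nc2: "2 \<le> Nc"
  proof -
    have "2 * 1 \<le> Kc * Lc" by (rule mult_le_mono) (use Kc_ge Lc_ge in auto)
    then show ?thesis by (simp add: Nc_def)
  qed
  have ch: "\<And>p. Suc p \<le> Nc - 1 \<Longrightarrow> (?y p, ?y (Suc p)) \<in> Enat G" using g by simp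
  have nl': "\<And>u p. p \<le> Nc - 1 \<Longrightarrow> \<not> load_at ms u (?y p)" using nl Nc2 by simp
  obtain u0 where u0: "comp_at ms u0 (?w 0)" using all_comp[of "Wn g 0"] g Kc_ge by auto
  define T0 where "T0 = (LEAST u. comp_at ms u (?w 0))"
  have T0c: "comp_at ms T0 (?w 0)" unfolding T0_def by (rule LeastI[where P="\<lambda>u. comp_at ms u (?w 0)", OF u0])
  have wl: "i < Kc \<Longrightarrow> comp_at ms u (?w i) \<Longrightarrow> T0 \<le> u" for i u
  proof (induction i arbitrary: u)
    case 0 then show ?case unfolding T0_def by (simp add: Least_le)
  next
    case (Suc i)
    have "?w i \<in> R1 ms u" using comp_parent[OF strat Suc.prems(2)] g Suc.prems(1) by simp
    then obtain u' where "u' < u" "comp_at ms u' (?w i)"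
      using peb_computed[OF strat, of u "?w i"] comp_lt[OF Suc.prems(2)] by auto
    then show ?case using Suc.IH[of u'] Suc.prems by simp
  qed
  have yT0: "?y (Nc - 1) \<in> R1 ms T0" using comp_parent[OF strat T0c] g Kc_ge by (simp add: Pi_0)
  obtain T where T: "T < T0" "comp_at ms T (?y (Nc - 1))"
  proof -
    have "?y (Nc - 1) \<notin> R1 ms 0" by (simp add: R1_def init_config_def)
    then obtain T where "0 \<le> T" "T < T0" "comp_at ms T (?y (Nc - 1)) \<or> load_at ms T (?y (Nc - 1))"
      using red_origin[OF strat, of 0 T0] yT0 comp_lt[OF T0c] by fastforce
    then show ?thesis using that nl[of "Nc - 1"] Nc2 by auto
  qed
  have TL: "T < length ms" using comp_lt[OF T(2)] .
  have before: "p \<le> Nc - 2 \<Longrightarrow> \<exists>u. u < T \<and> comp_at ms u (?y p)" for p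
  proof -
    assume p: "p \<le> Nc - 2"
    have "?y (Nc - 2) \<in> R1 ms T"
      using comp_parent[OF strat T(2), of "?y (Nc - 2)"] g Nc2 by (simp add: Suc_diff_Suc numeral_2_eq_2)
    then show ?thesis
      using back_walk[where y="\<lambda>p. to_nat (Yn g p)" and M="Nc - 1", OF strat ch nl', of "Nc - 2" 0 T 0 p] p TL Nc2
      by (auto simp: R1_def init_config_def)
  qed
  \<comment> \<open>pigeonhole\<close>
  let ?R = "R1 ms (Suc T)"
  have finR: "finite ?R" using fin_red[OF strat, of "Suc T"] TL by (simp add: R1_def)
  have cR: "card ?R \<le> r" using valid_R1[OF strat TL] .
  have yR: "?y (Nc - 1) \<in> ?R" using comp_red[OF strat T(2)] .
  define H where "H = {j \<in> {1..<Kc}. \<exists>p. (j - 1) * Lc \<le> p \<and> p < j * Lc \<and> ?y p \<in> ?R}"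
  define idx where "idx v = (case from_nat v of Yn g' p \<Rightarrow> p div Lc + 1 | _ \<Rightarrow> 0)" for v :: nat
  have Hsub: "H \<subseteq> idx ` (?R - {?y (Nc - 1)})"
  proof
    fix j assume "j \<in> H"
    then obtain p where p: "1 \<le> j" "j < Kc" "(j - 1) * Lc \<le> p" "p < j * Lc" "?y p \<in> ?R" by (auto simp: H_def)
    have "j * Lc \<le> (Kc - 1) * Lc" using p by (intro mult_le_mono1) simp
    moreover have "(Kc - 1) * Lc < Nc" using Kc_ge Lc_ge by (simp add: Nc_def diff_mult_distrib)
    ultimately have "p \<noteq> Nc - 1" using p by linarith
    then have "?y p \<in> ?R - {?y (Nc - 1)}" using p by (simp add: inj_eq[OF inj_to_nat'])
    moreover have "idx (?y p) = j" using seg_div[OF p(1) p(3) p(4)] by (simp add: idx_def)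
    ultimately show "j \<in> idx ` (?R - {?y (Nc - 1)})" by force
  qed
  have "card H \<le> card (?R - {?y (Nc - 1)})"
    using card_mono[OF _ Hsub] card_image_le[of "?R - {?y (Nc - 1)}" idx] finR by (meson finite_Diff finite_imageI le_trans)
  also have "\<dots> = card ?R - 1" using finR yR by simp
  finally have cH: "card H < Kc - 1" using cR rK Kc_ge yR finR
    by (metis card_0_eq diff_less empty_iff le_trans less_le_trans less_one not_less zero_less_diff)
  have "\<not> {1..<Kc} \<subseteq> H"
  proof
    assume "{1..<Kc} \<subseteq> H"
    then have "card {1..<Kc} \<le> card H" by (rule card_mono[rotated]) (simp add: H_def)
    then show False using cH by simp
  qed
  then obtain j0 where j0: "j0 \<in> {1..<Kc}" "j0 \<notin> H" by blast
  then obtain j where j: "1 \<le> j" "j < Kc" "j \<notin> H" by auto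
  \<comment> \<open>the W node that needs x_j\<close>
  let ?i = "Kc - j"
  have i: "?i < Kc" "1 \<le> ?i" using j by auto
  obtain ui where ui: "comp_at ms ui (?w ?i)" using all_comp[of "Wn g ?i"] g i by auto
  have Tui: "Suc T \<le> ui" using wl[OF i(1) ui] T(1) by simp
  have Pij: "Pidx ?i = j * Lc - 1" using j by (simp add: Pidx_def)
  have yq: "?y (j * Lc - 1) \<in> R1 ms ui" using comp_parent[OF strat ui, of "?y (Pidx ?i)"] g i Pij by simp
  have jL: "1 \<le> j * Lc" using j Lc_ge by simp
  have qle: "j * Lc - 1 \<le> Nc - 2"
  proof -
    have "j * Lc \<le> (Kc - 1) * Lc" using j by (intro mult_le_mono1) simp
    moreover have "(Kc - 1) * Lc + Lc = Nc" using Kc_ge by (simp add: Nc_def algebra_simps diff_mult_distrib)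
    ultimately show ?thesis using Lc_ge by linarith
  qed
  have notR: "\<forall>p. (j - 1) * Lc \<le> p \<and> p \<le> j * Lc - 1 \<longrightarrow> ?y p \<notin> R1 ms (Suc T)"
  proof (intro allI impI)
    fix p assume p: "(j - 1) * Lc \<le> p \<and> p \<le> j * Lc - 1"
    then have "p < j * Lc" using jL by linarith
    then show "?y p \<notin> R1 ms (Suc T)" using j p by (auto simp: H_def)
  qed
  have aq: "(j - 1) * Lc \<le> j * Lc - 1"
  proof -
    have "(j - 1) * Lc + Lc = j * Lc" using j by (simp add: algebra_simps diff_mult_distrib)
    then show ?thesis using Lc_ge by linarith
  qed
  show ?thesis
  proof (intro exI conjI allI impI)
    show "1 \<le> j" "j < Kc" using j by auto
    fix p assume p: "(j - 1) * Lc \<le> p \<and> p < j * Lc"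
    then have pq: "p \<le> j * Lc - 1" by linarith
    have qle1: "j * Lc - 1 \<le> Nc - 1" using qle by linarith
    obtain u2 where u2: "Suc T \<le> u2" "u2 < ui" "comp_at ms u2 (?y p)"
      using back_walk[where y="\<lambda>p. to_nat (Yn g p)" and M="Nc - 1", OF strat ch nl', of "j * Lc - 1" "(j - 1) * Lc" ui "Suc T" p] qle1 aq yq Tui
        comp_lt[OF ui] notR p pq by auto
    obtain u1 where u1: "u1 < T" "comp_at ms u1 (?y p)" using before[of p] pq qle by auto
    show "2 \<le> card {u. comp_at ms u (?y p)}" using two_comps[OF u1(2) u2(3)] u1 u2 by simp
  qed
qed

end

lemma load_unique: "load_at ms u v \<Longrightarrow> load_at ms u v' \<Longrightarrow> v = v'"
  by (auto simp: load_at_def)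

lemma lower:
  assumes strat: "pebbling_strategy (Vnat G) (Enat G) 1 r ms"
    and G1: "1 \<le> G" and rK: "r \<le> Kc - 1"
  shows "card (Vnat G) + Lc * (G - num_io ms) \<le> length (filter is_comp ms)"
proof -
  define ld where "ld g \<longleftrightarrow> (\<exists>u p. p < Nc \<and> load_at ms u (to_nat (Yn g p)))" for g
  define Ld where "Ld = {g \<in> {..<G}. ld g}"
  define NL where "NL = {g \<in> {..<G}. \<not> ld g}"
  define f where "f g = (SOME u. \<exists>p. p < Nc \<and> load_at ms u (to_nat (Yn g p)))" for g
  have fprop: "g \<in> Ld \<Longrightarrow> \<exists>p. p < Nc \<and> load_at ms (f g) (to_nat (Yn g p))" for g
    unfolding f_def Ld_def ld_def by (rule someI_ex) auto
  have inj: "inj_on f Ld"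
  proof
    fix g g' assume a: "g \<in> Ld" "g' \<in> Ld" "f g = f g'"
    obtain p where p: "load_at ms (f g) (to_nat (Yn g p))" using fprop[OF a(1)] by auto
    obtain p' where p': "load_at ms (f g') (to_nat (Yn g' p'))" using fprop[OF a(2)] by auto
    have "to_nat (Yn g p) = to_nat (Yn g' p')" using load_unique[OF p] p' a(3) by simp
    then show "g = g'" by (simp add: inj_eq[OF inj_to_nat'])
  qed
  have cLd: "card Ld \<le> num_io ms"
  proof -
    have "f ` Ld \<subseteq> {u. \<exists>v. load_at ms u v}" using fprop by blast
    moreover have "finite {u. \<exists>v. load_at ms u v}"
      by (rule finite_subset[of _ "{..<length ms}"]) (auto simp: load_at_def)
    ultimately have "card Ld \<le> card {u. \<exists>v. load_at ms u v}" using card_inj_on_le[OF inj] by blast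
    then show ?thesis using nload_count[of ms] by simp
  qed
  have cNL: "G - num_io ms \<le> card NL"
  proof -
    have e: "Ld \<union> NL = {..<G}" "Ld \<inter> NL = {}" by (auto simp: Ld_def NL_def)
    have f: "finite Ld" "finite NL" by (auto simp: Ld_def NL_def)
    have "card (Ld \<union> NL) = card Ld + card NL" by (rule card_Un_disjoint[OF f e(2)])
    then have "card Ld + card NL = G" using e(1) by simp
    then show ?thesis using cLd by linarith
  qed
  define jj where "jj g = (SOME j. 1 \<le> j \<and> j < Kc \<and> (\<forall>p. (j - 1) * Lc \<le> p \<and> p < j * Lc \<longrightarrow>
      2 \<le> card {u. comp_at ms u (to_nat (Yn g p))}))" for g
  have jjp: "g \<in> NL \<Longrightarrow> 1 \<le> jj g \<and> jj g < Kc \<and> (\<forall>p. (jj g - 1) * Lc \<le> p \<and> p < jj g * Lc \<longrightarrow>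
      2 \<le> card {u. comp_at ms u (to_nat (Yn g p))})" for g
  proof -
    assume g: "g \<in> NL"
    have "\<exists>j. 1 \<le> j \<and> j < Kc \<and> (\<forall>p. (j - 1) * Lc \<le> p \<and> p < j * Lc \<longrightarrow> 2 \<le> card {u. comp_at ms u (to_nat (Yn g p))})"
      by (rule gadget_extra[OF strat G1 rK]) (use g in \<open>auto simp: NL_def ld_def\<close>)
    then show ?thesis unfolding jj_def by (rule someI_ex)
  qed
  define Seg where "Seg g = (\<lambda>p. to_nat (Yn g p)) ` {(jj g - 1) * Lc..<jj g * Lc}" for g
  define Ex where "Ex = (\<Union>g\<in>NL. Seg g)"
  have cSeg: "g \<in> NL \<Longrightarrow> card (Seg g) = Lc" for g
  proof -
    assume g: "g \<in> NL"
    have "card (Seg g) = card {(jj g - 1) * Lc..<jj g * Lc}"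
      unfolding Seg_def by (rule card_image) (auto simp: inj_on_def inj_eq[OF inj_to_nat'])
    also have "\<dots> = jj g * Lc - (jj g - 1) * Lc" by simp
    also have "\<dots> = Lc" using jjp[OF g] by (simp add: diff_mult_distrib)
    finally show ?thesis .
  qed
  have finNL: "finite NL" by (simp add: NL_def)
  have cEx: "card Ex = card NL * Lc"
  proof -
    have "card Ex = (\<Sum>g\<in>NL. card (Seg g))"
      unfolding Ex_def by (rule card_UN_disjoint) (auto simp: finNL Seg_def inj_eq[OF inj_to_nat'])
    also have "\<dots> = (\<Sum>g\<in>NL. Lc)" using cSeg by simp
    finally show ?thesis by simp
  qed
  have ExV: "Ex \<subseteq> Vnat G"
  proof
    fix v assume "v \<in> Ex"
    then obtain g p where gp: "g \<in> NL" "v = to_nat (Yn g p)" "p < jj g * Lc" by (auto simp: Ex_def Seg_def)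
    have "jj g * Lc \<le> Kc * Lc" using jjp[OF gp(1)] by (intro mult_le_mono1) simp
    then have "p < Kc * Lc" using gp(3) by linarith
    then have "p < Nc" by (simp add: Nc_def)
    then show "v \<in> Vnat G" using gp by (simp add: NL_def)
  qed
  have ex2: "v \<in> Ex \<Longrightarrow> 2 \<le> card {u. comp_at ms u v}" for v
    using jjp by (auto simp: Ex_def Seg_def)
  have finC: "finite {u. comp_at ms u v}" for v
    by (rule finite_subset[of _ "{..<length ms}"]) (auto simp: comp_at_def)
  have v1: "v \<in> Vnat G \<Longrightarrow> 1 \<le> card {u. comp_at ms u v}" for v
  proof -
    assume "v \<in> Vnat G"
    then obtain a where a: "v = to_nat a" "inVn G a" by (auto simp: Vnat_def Vn_def)
    then obtain u where "comp_at ms u v" using all_comp[OF strat G1 rK a(2)] by auto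
    then have "{u. comp_at ms u v} \<noteq> {}" by auto
    then show ?thesis using finC[of v] by (simp add: Suc_le_eq card_gt_0_iff)
  qed
  have finV: "finite (Vnat G)" using dag[of G] by (simp add: is_dag_def)
  have ind: "(\<Sum>v\<in>Vnat G. (if v \<in> Ex then 1 else 0::nat)) = card Ex"
  proof -
    have "(\<Sum>v\<in>Vnat G. (if v \<in> Ex then 1 else 0::nat)) = (\<Sum>v\<in>Vnat G \<inter> Ex. 1)"
      using sum.inter_restrict[OF finV, of "\<lambda>_. 1::nat" Ex] by simp
    also have "\<dots> = card Ex" using ExV by (simp add: Int_absorb1)
    finally show ?thesis .
  qed
  have "card (Vnat G) + card Ex = (\<Sum>v\<in>Vnat G. (1::nat)) + (\<Sum>v\<in>Vnat G. (if v \<in> Ex then 1 else 0::nat))"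
    using ind by simp
  also have "\<dots> = (\<Sum>v\<in>Vnat G. (1::nat) + (if v \<in> Ex then 1 else 0))"
    by (rule sum.distrib[symmetric])
  also have "\<dots> \<le> (\<Sum>v\<in>Vnat G. card {u. comp_at ms u v})"
  proof (rule sum_mono)
    fix v assume v: "v \<in> Vnat G"
    show "1 + (if v \<in> Ex then 1 else 0) \<le> card {u. comp_at ms u v}"
      using v1[OF v] ex2[of v] by (cases "v \<in> Ex") auto
  qed
  also have "\<dots> \<le> length (filter is_comp ms)"
    by (rule ncomp_count[OF finV]) (rule comp_in_V[OF strat])
  finally have "card (Vnat G) + card NL * Lc \<le> length (filter is_comp ms)" using cEx by simp
  moreover have "Lc * (G - num_io ms) \<le> card NL * Lc" using cNL by (simp add: mult.commute)
  ultimately show ?thesis by linarith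
qed

lemma one_proc:
  assumes G: "1 \<le> G"
  shows "pebblable (Vnat G) (Enat G) 1 6 \<and> G \<le> 2 * OPT_IO (Vnat G) (Enat G) 1 6 1 \<and>
         OPT_IO (Vnat G) (Enat G) 1 6 1 \<le> card (Vnat G) + G * 12"
proof -
  have s1: "pebbling_strategy (Vnat G) (Enat G) 1 6 (ms1 G)" "length (filter is_comp (ms1 G)) = card (Vnat G)"
    "num_io (ms1 G) = G * (2 * (Kc - 1))" using strat1[OF G, of 6] by auto
  have K7: "Kc = 7" and L24: "Lc = 24" by (simp_all add: Kc_def Lc_def)
  have c1: "strategy_cost 1 (ms1 G) = card (Vnat G) + G * 12"
    using s1 cost_formula[of 1 "ms1 G"] by (simp add: Kc_def)
  let ?P = "\<lambda>c. \<exists>ms. pebbling_strategy (Vnat G) (Enat G) 1 6 ms \<and> strategy_cost 1 ms = c"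
  have ex: "?P (strategy_cost 1 (ms1 G))" using s1 by blast
  have optle: "OPT (Vnat G) (Enat G) 1 6 1 \<le> strategy_cost 1 (ms1 G)"
    unfolding OPT_def by (rule Least_le) (rule ex)
  have "?P (OPT (Vnat G) (Enat G) 1 6 1)" unfolding OPT_def by (rule LeastI_ex) (use ex in blast)
  then obtain ms0 where ms0: "pebbling_strategy (Vnat G) (Enat G) 1 6 ms0" "strategy_cost 1 ms0 = OPT (Vnat G) (Enat G) 1 6 1"
    by blast
  let ?Q = "\<lambda>t. \<exists>ms. pebbling_strategy (Vnat G) (Enat G) 1 6 ms \<and> strategy_cost 1 ms = OPT (Vnat G) (Enat G) 1 6 1 \<and> num_io ms = t"
  have "?Q (OPT_IO (Vnat G) (Enat G) 1 6 1)" unfolding OPT_IO_def by (rule LeastI_ex) (use ms0 in blast)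
  then obtain ms where ms: "pebbling_strategy (Vnat G) (Enat G) 1 6 ms" "strategy_cost 1 ms = OPT (Vnat G) (Enat G) 1 6 1"
    "num_io ms = OPT_IO (Vnat G) (Enat G) 1 6 1" by blast
  have lo: "card (Vnat G) + Lc * (G - num_io ms) \<le> length (filter is_comp ms)"
    by (rule lower[OF ms(1) G]) (simp add: K7)
  have cm: "strategy_cost 1 ms = length (filter is_comp ms) + num_io ms" using cost_formula[of 1 ms] by simp
  have up: "strategy_cost 1 ms \<le> card (Vnat G) + G * 12" using ms(2) optle c1 by simp
  have "G \<le> 2 * num_io ms"
  proof (cases "num_io ms \<le> G")
    case True
    have "Lc * (G - num_io ms) = 24 * G - 24 * num_io ms" by (simp add: L24 diff_mult_distrib2)
    then show ?thesis using lo cm up True by linarith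
  next
    case False then show ?thesis by linarith
  qed
  moreover have "num_io ms \<le> card (Vnat G) + G * 12" using cm up by linarith
  ultimately show ?thesis using ms(3) s1(1) unfolding pebblable_def by auto
qed

theorem mainTheorem12:
  shows "\<exists>(g::nat) (r0::nat) (V :: nat \<Rightarrow> nat set) (E :: nat \<Rightarrow> (nat \<times> nat) set).
    g > 0 \<and> r0 > 0 \<and> even r0 \<and>
    (\<forall>m. is_dag (V m) (E m)) \<and>
    filterlim (\<lambda>m. card (V m)) at_top sequentially \<and>
    (\<forall>m. pebblable (V m) (E m) 1 r0 \<and> pebblable (V m) (E m) 2 (r0 div 2)
          \<and> pebblable (V m) (E m) 2 r0) \<and>
    (\<lambda>m. real (OPT_IO (V m) (E m) 1 r0 g)) \<in> \<Theta>(\<lambda>m. real (card (V m))) \<and>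
    (\<forall>m. OPT_IO (V m) (E m) 2 (r0 div 2) g = 0) \<and>
    (\<forall>m. OPT_IO (V m) (E m) 2 r0 g = 0)"
proof -
  define V where "V m = Vnat (Suc m)" for m
  define E where "E m = Enat (Suc m)" for m
  define M where "M = T2 + Nc + Kc"
  have M1: "1 \<le> M" using T2_ge by (simp add: M_def)
  have cV: "card (V m) = Suc m * M" for m
    using card_Vnat[of "Suc m"] by (simp add: V_def M_def Dd_def algebra_simps)
  have dag': "\<forall>m. is_dag (V m) (E m)" using dag by (simp add: V_def E_def)
  have lim: "filterlim (\<lambda>m. card (V m)) at_top sequentially"
  proof (rule filterlim_at_top_mono[OF filterlim_ident])
    show "\<forall>\<^sub>F m in sequentially. m \<le> card (V m)"
    proof (rule always_eventually, rule allI)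
      fix m
      have "m \<le> Suc m * 1" by simp
      also have "\<dots> \<le> Suc m * M" using M1 by (intro mult_le_mono2)
      finally show "m \<le> card (V m)" using cV by simp
    qed
  qed
  have op: "pebblable (V m) (E m) 1 6 \<and> Suc m \<le> 2 * OPT_IO (V m) (E m) 1 6 1 \<and>
         OPT_IO (V m) (E m) 1 6 1 \<le> card (V m) + Suc m * 12" for m
    using one_proc[of "Suc m"] by (simp add: V_def E_def)
  have tp3: "pebblable (V m) (E m) 2 3 \<and> OPT_IO (V m) (E m) 2 3 1 = 0" for m
    using two_proc[of "Suc m" 3 1] by (simp add: V_def E_def)
  have tp6: "pebblable (V m) (E m) 2 6 \<and> OPT_IO (V m) (E m) 2 6 1 = 0" for m
    using two_proc[of "Suc m" 6 1] by (simp add: V_def E_def)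
  have th: "(\<lambda>m. real (OPT_IO (V m) (E m) 1 6 1)) \<in> \<Theta>(\<lambda>m. real (card (V m)))"
  proof (rule bigthetaI'[of "1 / (2 * real M)" 13])
    show "0 < 1 / (2 * real M)" using M1 by simp
    show "(0::real) < 13" by simp
    show "\<forall>\<^sub>F m in sequentially. 1 / (2 * real M) * norm (real (card (V m))) \<le> norm (real (OPT_IO (V m) (E m) 1 6 1)) \<and>
        norm (real (OPT_IO (V m) (E m) 1 6 1)) \<le> 13 * norm (real (card (V m)))"
    proof (rule always_eventually, rule allI)
      fix m
      let ?io = "OPT_IO (V m) (E m) 1 6 1"
      have a: "real (Suc m) \<le> 2 * real ?io" using op[of m] by (metis of_nat_le_iff of_nat_mult of_nat_numeral)
      have b: "1 / (2 * real M) * real (card (V m)) = real (Suc m) / 2" using M1 cV[of m] by (simp add: field_simps)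
      have c: "?io \<le> 13 * card (V m)"
      proof -
        have "Suc m * 1 \<le> Suc m * M" using M1 by (intro mult_le_mono2)
        then have "Suc m \<le> card (V m)" using cV[of m] by simp
        then have "Suc m * 12 \<le> card (V m) * 12" by (rule mult_le_mono1)
        moreover have "?io \<le> card (V m) + Suc m * 12" using op[of m] by blast
        ultimately show ?thesis by linarith
      qed
      show "1 / (2 * real M) * norm (real (card (V m))) \<le> norm (real ?io) \<and> norm (real ?io) \<le> 13 * norm (real (card (V m)))"
      proof -
        have c': "real ?io \<le> 13 * real (card (V m))" using c by (metis of_nat_le_iff of_nat_mult of_nat_numeral)
        have n: "norm (real x) = real x" for x :: nat by simp
        show ?thesis unfolding n
        proof (intro conjI)
          have d: "real (Suc m) / 2 \<le> real ?io" using a by (simp add: field_simps)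
          show "1 / (2 * real M) * real (card (V m)) \<le> real ?io" unfolding b by (rule d)
          show "real ?io \<le> 13 * real (card (V m))" by (rule c')
        qed
      qed
    qed
  qed
  show ?thesis
    apply (rule exI[of _ 1], rule exI[of _ 6], rule exI[of _ V], rule exI[of _ E])
    using dag' lim op tp3 tp6 th by auto
qed

end
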